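(* Let $k\ge 0$, let $G$ be an oriented graph and $S\subseteq V(G)$. Then $G$ can be derived, as a $k$-Burling graph, from a Burling tree whose top-set (for $G$) is $S$, if and only if there is a set $\mathcal S$ such that $(G,\mathcal S)$ is a $k$-sequential graph with base forest $H=G[S]$.
   Context: Oriented graphs are finite, without loops, multiple arcs or pairs of opposite arcs. In a rooted tree $T$ with root $r$, each non-root vertex $v$ has a parent $p(v)$; children, leaves, ancestors and descendants are as usual. A branch is a sequence $v_1\dots v_k$ ($k\ge0$) with $v_i$ the parent of $v_{i+1}$; it starts at $v_1$. A Burling tree is a 4-tuple $(T,r,\ell,c)$: $T$ a rooted tree with root $r$; $\ell$ assigns to each non-leaf vertex $v$ one of its children $\ell(v)$ (the last-born of $v$); $c$ assigns to every vertex $v$ that is neither the root nor a last-born the vertex-set of a (possibly empty) branch starting at $\ell(p(v))$, and $c(v)=\emptyset$ if $v$ is the root or a last-born. The oriented graph fully derived from it has vertex-set $V(T)$ and an arc $uv$ iff $v\in c(u)$; an oriented graph is derived from the Burling tree if it is an induced subgraph of the fully derived one. $G$ is derived from $T$ as a $k$-Burling graph if it is derived from $T$ and every branch of $T$ contains at most $k$ vertices of $G$. If $G$ is derived from $(T,r,\ell,c)$, the top-set of $G$ is the set of vertices $v$ of $G$ such that $v$ is the only vertex of $G$ on the branch of $T$ from $r$ to $v$. An in-tree is an oriented graph obtained from a rooted tree by orienting every edge towards the root; an in-forest is an oriented forest whose components are in-trees (possibly empty); in an in-forest every vertex that is not a sink has a unique out-neighbor. $k$-sequential graphs are pairs $(G,\mathcal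 S)$, $G$ an oriented graph and $\mathcal S$ a set of stable sets of $G$, defined recursively: the $0$-sequential graph is $(G,\{\emptyset\})$ with $G$ the empty graph. For $k\ge1$, $(G,\mathcal S)$ is $k$-sequential if it is obtained as follows: pick a (possibly empty) in-forest $H$ (the base forest); for every vertex $v$ of $H$ pick a $(k-1)$-sequential graph $(H_v,\mathcal R_v)$, these graphs being vertex-disjoint from each other and from $H$; $G$ consists of $H$, all the $H_v$, and, for every vertex $u$ of $H$ that is not a sink of $H$, with unique out-neighbor $v$ in $H$, all arcs from $u$ to a chosen set $R\in\mathcal R_v$; there are no other vertices or arcs. Finally $\mathcal S=\{\emptyset\}\cup\{\{v\}\cup R: v\in V(H), R\in\mathcal R_v\}$. *)

theory Defs
  imports Main
begin

record 'a ograph =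
  gV :: "'a set"
  gA :: "('a \<times> 'a) set"

definition oriented_graph :: "'a ograph \<Rightarrow> bool" where
  "oriented_graph G \<longleftrightarrow> finite (gV G) \<and> gA G \<subseteq> gV G \<times> gV G
     \<and> (\<forall>u. (u, u) \<notin> gA G) \<and> (\<forall>u v. (u, v) \<in> gA G \<longrightarrow> (v, u) \<notin> gA G)"

definition empty_graph :: "'a ograph" where
  "empty_graph = \<lparr>gV = {}, gA = {}\<rparr>"

definition induced :: "'a ograph \<Rightarrow> 'a set \<Rightarrow> 'a ograph" where
  "induced G S = \<lparr>gV = S, gA = gA G \<inter> (S \<times> S)\<rparr>"

definition map_graph :: "('a \<Rightarrow> 'b) \<Rightarrow> 'a ograph \<Rightarrow> 'b ograph" where
  "map_graph f G = \<lparr>gV = f ` gV G, gA = map_prod f f ` gA G\<rparr>"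

text \<open>In-forest: an oriented forest whose components are in-trees, i.e. an oriented
  graph in which every vertex has at most one out-neighbour and there is no directed cycle
  (equivalently: every component is a rooted tree with edges oriented towards the root).\<close>
definition in_forest :: "'a ograph \<Rightarrow> bool" where
  "in_forest H \<longleftrightarrow> oriented_graph H
     \<and> (\<forall>u v w. (u, v) \<in> gA H \<longrightarrow> (u, w) \<in> gA H \<longrightarrow> v = w)
     \<and> acyclic (gA H)"

fun kseq_base :: "nat \<Rightarrow> 'a ograph \<Rightarrow> 'a set set \<Rightarrow> 'a ograph \<Rightarrow> bool" where
  "kseq_base 0 G Ss H \<longleftrightarrow> G = empty_graph \<and> Ss = {{}} \<and> H = empty_graph"
| "kseq_base (Suc k) G Ss H \<longleftrightarrow> in_forest H \<and>
     (\<exists>(Hs :: 'a \<Rightarrow> 'a ograph) (Rs :: 'a \<Rightarrow> 'a set set) (R :: 'a \<Rightarrow> 'a set).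
        (\<forall>v\<in>gV H. \<exists>H'. kseq_base k (Hs v) (Rs v) H')
      \<and> (\<forall>v\<in>gV H. gV (Hs v) \<inter> gV H = {})
      \<and> (\<forall>v\<in>gV H. \<forall>w\<in>gV H. v \<noteq> w \<longrightarrow> gV (Hs v) \<inter> gV (Hs w) = {})
      \<and> (\<forall>u v. (u, v) \<in> gA H \<longrightarrow> R u \<in> Rs v)
      \<and> gV G = gV H \<union> (\<Union>v\<in>gV H. gV (Hs v))
      \<and> gA G = gA H \<union> (\<Union>v\<in>gV H. gA (Hs v))
               \<union> {(u, x). \<exists>v. (u, v) \<in> gA H \<and> x \<in> R u}
      \<and> Ss = {{}} \<union> {insert v X | v X. v \<in> gV H \<and> X \<in> Rs v})"

record 'b btree =
  tV :: "'b set"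
  troot :: 'b
  tpar :: "'b \<Rightarrow> 'b"     \<comment> \<open>parent (meaningful on non-root vertices)\<close>
  tlast :: "'b \<Rightarrow> 'b"    \<comment> \<open>last-born child (meaningful on non-leaves)\<close>
  tc :: "'b \<Rightarrow> 'b set"

definition rooted_tree :: "'b btree \<Rightarrow> bool" where
  "rooted_tree T \<longleftrightarrow> finite (tV T) \<and> troot T \<in> tV T
     \<and> (\<forall>v\<in>tV T - {troot T}. tpar T v \<in> tV T)
     \<and> (\<forall>v\<in>tV T. \<exists>n. (tpar T ^^ n) v = troot T)"

definition children :: "'b btree \<Rightarrow> 'b \<Rightarrow> 'b set" where
  "children T v = {w \<in> tV T - {troot T}. tpar T w = v}"

definition is_leaf :: "'b btree \<Rightarrow> 'b \<Rightarrow> bool" where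
  "is_leaf T v \<longleftrightarrow> children T v = {}"

definition is_branch :: "'b btree \<Rightarrow> 'b list \<Rightarrow> bool" where
  "is_branch T xs \<longleftrightarrow> set xs \<subseteq> tV T
     \<and> successively (\<lambda>a b. b \<in> children T a) xs"

definition is_last_born :: "'b btree \<Rightarrow> 'b \<Rightarrow> bool" where
  "is_last_born T v \<longleftrightarrow> v \<noteq> troot T \<and> v = tlast T (tpar T v)"

definition burling_tree :: "'b btree \<Rightarrow> bool" where
  "burling_tree T \<longleftrightarrow> rooted_tree T
     \<and> (\<forall>v\<in>tV T. \<not> is_leaf T v \<longrightarrow> tlast T v \<in> children T v)
     \<and> (\<forall>v\<in>tV T. (v = troot T \<or> is_last_born T v) \<longrightarrow> tc T v = {})
     \<and> (\<forall>v\<in>tV T. v \<noteq> troot T \<and> \<not> is_last_born T v \<longrightarrow>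
          (\<exists>xs. is_branch T xs \<and> (xs = [] \<or> hd xs = tlast T (tpar T v)) \<and> tc T v = set xs))"

definition fully_derived :: "'b btree \<Rightarrow> 'b ograph" where
  "fully_derived T = \<lparr>gV = tV T, gA = {(u, v). u \<in> tV T \<and> v \<in> tV T \<and> v \<in> tc T u}\<rparr>"

definition derived :: "'b btree \<Rightarrow> 'b ograph \<Rightarrow> bool" where
  "derived T G \<longleftrightarrow> gV G \<subseteq> tV T \<and> G = induced (fully_derived T) (gV G)"

definition k_burling_derived :: "nat \<Rightarrow> 'b btree \<Rightarrow> 'b ograph \<Rightarrow> bool" where
  "k_burling_derived k T G \<longleftrightarrow> derived T G
     \<and> (\<forall>xs. is_branch T xs \<longrightarrow> card (set xs \<inter> gV G) \<le> k)"

definition top_set :: "'b btree \<Rightarrow> 'b ograph \<Rightarrow> 'b set" where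
  "top_set T G = {v \<in> gV G. \<forall>xs. is_branch T xs \<and> xs \<noteq> [] \<and> hd xs = troot T \<and> last xs = v
                     \<longrightarrow> set xs \<inter> gV G = {v}}"

end

theory Submission
  imports Defs "HOL-Library.Nat_Bijection"
begin


definition dep :: "'b btree \<Rightarrow> 'b \<Rightarrow> nat" where
  "dep T x = (LEAST n. (tpar T ^^ n) x = troot T)"

definition sanc :: "'b btree \<Rightarrow> 'b \<Rightarrow> 'b set" where
  "sanc T x = {(tpar T ^^ n) x | n. 1 \<le> n \<and> n \<le> dep T x}"

definition anc :: "'b btree \<Rightarrow> 'b \<Rightarrow> 'b list" where
  "anc T x = map (\<lambda>i. (tpar T ^^ (dep T x - i)) x) [0..<Suc (dep T x)]"

lemma succ_closed:
  assumes "successively (\<lambda>a b. b \<in> children T a) xs" "xs \<noteq> []" "hd xs \<in> A"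
    "\<And>a b. a \<in> A \<Longrightarrow> b \<in> children T a \<Longrightarrow> b \<in> A"
  shows "set xs \<subseteq> A"
  using assms
proof (induction xs)
  case Nil then show ?case by simp
next
  case (Cons x xs)
  then show ?case
    by (cases xs) (auto simp: successively_Cons)
qed

locale rtree =
  fixes T :: "'b btree"
  assumes rt: "rooted_tree T"
begin

abbreviation "V \<equiv> tV T"
abbreviation "par \<equiv> tpar T"
abbreviation "rt \<equiv> troot T"
abbreviation "D \<equiv> dep T"

lemma root_in: "rt \<in> V" using rt by (simp add: rooted_tree_def)
lemma finV: "finite V" using rt by (simp add: rooted_tree_def)
lemma par_in: "x \<in> V \<Longrightarrow> x \<noteq> rt \<Longrightarrow> par x \<in> V" using rt by (simp add: rooted_tree_def)

lemma pow_dep: "x \<in> V \<Longrightarrow> (par ^^ D x) x = rt"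
  unfolding dep_def using rt by (auto simp: rooted_tree_def intro: LeastI_ex)

lemma dep_le: "(par ^^ n) x = rt \<Longrightarrow> D x \<le> n"
  unfolding dep_def by (rule Least_le)

lemma dep_root[simp]: "D rt = 0"
  using dep_le[of 0 rt] by simp

lemma dep0: "x \<in> V \<Longrightarrow> D x = 0 \<longleftrightarrow> x = rt"
  using pow_dep[of x] by auto

lemma dep_par: assumes "x \<in> V" "x \<noteq> rt" shows "D x = Suc (D (par x))"
proof -
  have p: "par x \<in> V" using par_in assms by simp
  have "D x \<noteq> 0" using dep0 assms by simp
  then obtain m where m: "D x = Suc m" by (cases "D x") auto
  have "(par ^^ m) (par x) = rt" using pow_dep[OF assms(1)] m by (simp add: funpow_Suc_right del: funpow.simps)
  hence "D (par x) \<le> m" by (rule dep_le)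
  moreover have "(par ^^ Suc (D (par x))) x = rt" using pow_dep[OF p] by (simp add: funpow_Suc_right del: funpow.simps)
  hence "D x \<le> Suc (D (par x))" by (rule dep_le)
  ultimately show ?thesis using m by simp
qed

lemma pow_in: "x \<in> V \<Longrightarrow> n \<le> D x \<Longrightarrow> (par ^^ n) x \<in> V \<and> D ((par ^^ n) x) = D x - n"
proof (induction n)
  case 0 then show ?case by simp
next
  case (Suc n)
  then have IH: "(par ^^ n) x \<in> V" "D ((par ^^ n) x) = D x - n" by auto
  have ne: "(par ^^ n) x \<noteq> rt" using IH Suc.prems by auto
  show ?case using par_in[OF IH(1) ne] dep_par[OF IH(1) ne] IH Suc.prems by simp
qed

lemma childD: "b \<in> children T a \<Longrightarrow> b \<in> V \<and> b \<noteq> rt \<and> par b = a \<and> a \<in> V \<and> D b = Suc (D a)"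
  unfolding children_def using par_in dep_par by auto

lemma branch_nth:
  assumes "is_branch T xs" "i \<le> j" "j < length xs"
  shows "(par ^^ (j - i)) (xs ! j) = xs ! i \<and> D (xs ! j) = D (xs ! i) + (j - i)"
  using assms(2,3)
proof (induction j)
  case 0 then show ?case by simp
next
  case (Suc j)
  show ?case
  proof (cases "i = Suc j")
    case True then show ?thesis by simp
  next
    case False
    hence ij: "i \<le> j" using Suc.prems by simp
    have IH: "(par ^^ (j - i)) (xs ! j) = xs ! i \<and> D (xs ! j) = D (xs ! i) + (j - i)"
      using Suc ij by simp
    have c: "xs ! Suc j \<in> children T (xs ! j)"
      using assms(1) Suc.prems by (auto simp: is_branch_def intro: successively_nth)
    have e: "Suc j - i = Suc (j - i)" using ij by simp
    show ?thesis using IH childD[OF c] unfolding e by (simp add: funpow_Suc_right del: funpow.simps)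
  qed
qed

lemma branch_set: "is_branch T xs \<Longrightarrow> set xs \<subseteq> V" by (simp add: is_branch_def)

lemma branch_tl_nonroot:
  assumes "is_branch T xs" "0 < i" "i < length xs" shows "xs ! i \<noteq> rt"
proof -
  obtain j where j: "i = Suc j" using assms(2) by (cases i) auto
  have "xs ! Suc j \<in> children T (xs ! j)"
    using assms j by (auto simp: is_branch_def intro: successively_nth)
  thus ?thesis using childD j by auto
qed

lemma anc_len[simp]: "length (anc T x) = Suc (D x)" by (simp add: anc_def)
lemma anc_nth: "i \<le> D x \<Longrightarrow> anc T x ! i = (par ^^ (D x - i)) x"
  by (simp add: anc_def nth_map del: upt_Suc)
lemma anc_hd: "x \<in> V \<Longrightarrow> hd (anc T x) = rt"
proof -
  assume x: "x \<in> V"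
  have "anc T x \<noteq> []" using anc_len[of x] by (metis length_0_conv nat.distinct(1))
  hence "hd (anc T x) = anc T x ! 0" by (rule hd_conv_nth)
  also have "\<dots> = rt" using anc_nth[of 0 x] pow_dep[OF x] by simp
  finally show ?thesis .
qed
lemma anc_last: "last (anc T x) = x"
  by (simp add: anc_def)
lemma anc_set: "set (anc T x) = {(par ^^ n) x | n. n \<le> D x}"
proof
  show "set (anc T x) \<subseteq> {(par ^^ n) x | n. n \<le> D x}"
    by (auto simp: anc_def simp del: upt_Suc)
  show "{(par ^^ n) x | n. n \<le> D x} \<subseteq> set (anc T x)"
  proof
    fix y assume "y \<in> {(par ^^ n) x | n. n \<le> D x}"
    then obtain n where n: "n \<le> D x" "y = (par ^^ n) x" by auto
    have "anc T x ! (D x - n) = y" using n by (simp add: anc_nth)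
    moreover have "D x - n < length (anc T x)" by simp
    ultimately show "y \<in> set (anc T x)" by (metis nth_mem)
  qed
qed

lemma anc_branch: assumes "x \<in> V" shows "is_branch T (anc T x)"
proof -
  have "set (anc T x) \<subseteq> V" using pow_in[OF assms] by (auto simp: anc_set)
  moreover have "successively (\<lambda>a b. b \<in> children T a) (anc T x)"
    unfolding successively_conv_nth
  proof (intro allI impI)
    fix i assume i: "Suc i < length (anc T x)"
    let ?b = "(par ^^ (D x - Suc i)) x"
    have b: "?b \<in> V" "D ?b = Suc i" using pow_in[OF assms, of "D x - Suc i"] i by auto
    have "?b \<noteq> rt" using b i dep0 by auto
    moreover have "D x - i = Suc (D x - Suc i)" using i by simp
    hence "par ?b = (par ^^ (D x - i)) x" by simp
    ultimately show "anc T x ! Suc i \<in> children T (anc T x ! i)"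
      using i b by (simp add: anc_nth children_def)
  qed
  ultimately show ?thesis by (simp add: is_branch_def)
qed

lemma root_branch:
  assumes "is_branch T xs" "xs \<noteq> []" "hd xs = rt"
  shows "xs = anc T (last xs)"
proof -
  let ?j = "length xs - 1"
  have lj: "?j < length xs" using assms by simp
  have h: "xs ! 0 = rt" using assms by (simp add: hd_conv_nth)
  have dl: "D (last xs) = ?j" using branch_nth[OF assms(1), of 0 ?j] lj h assms(2)
    by (simp add: last_conv_nth)
  show ?thesis
  proof (rule nth_equalityI)
    show "length xs = length (anc T (last xs))" using dl assms by simp
    fix i assume "i < length xs"
    then show "xs ! i = anc T (last xs) ! i"
      using branch_nth[OF assms(1), of i ?j] dl assms(2) by (simp add: anc_nth last_conv_nth)
  qed
qed

lemma sancI: "1 \<le> n \<Longrightarrow> n \<le> D x \<Longrightarrow> (par ^^ n) x \<in> sanc T x"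
  unfolding sanc_def by auto

lemma sanc_anc: "set (anc T x) = insert x (sanc T x)"
proof
  show "set (anc T x) \<subseteq> insert x (sanc T x)"
  proof
    fix y assume "y \<in> set (anc T x)"
    then obtain n where n: "n \<le> D x" "y = (par ^^ n) x" by (auto simp: anc_set)
    show "y \<in> insert x (sanc T x)"
    proof (cases n)
      case 0 then show ?thesis using n by simp
    next
      case (Suc m) then show ?thesis using n sancI[of n x] by simp
    qed
  qed
  show "insert x (sanc T x) \<subseteq> set (anc T x)"
    unfolding anc_set sanc_def by (auto, metis funpow_0 le0)
qed

lemma sancD: assumes "x \<in> V" "w \<in> sanc T x"
  shows "w \<in> V \<and> D w < D x \<and> w = (par ^^ (D x - D w)) x"
proof -
  obtain n where n: "1 \<le> n" "n \<le> D x" "w = (par ^^ n) x" using assms by (auto simp: sanc_def)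
  thus ?thesis using pow_in[OF assms(1) n(2)] by auto
qed


lemma sanc_notin: "x \<in> V \<Longrightarrow> x \<notin> sanc T x"
  using sancD by blast

lemma sanc_child: assumes "b \<in> children T a" shows "sanc T b = insert a (sanc T a)"
proof -
  have c: "b \<in> V" "b \<noteq> rt" "par b = a" "a \<in> V" "D b = Suc (D a)" using childD[OF assms] by auto
  show ?thesis
  proof
    show "sanc T b \<subseteq> insert a (sanc T a)"
    proof
      fix w assume "w \<in> sanc T b"
      then obtain n where n: "1 \<le> n" "n \<le> D b" "w = (par ^^ n) b" by (auto simp: sanc_def)
      then obtain m where m: "n = Suc m" by (cases n) auto
      have w: "w = (par ^^ m) a" using n m c by (simp add: funpow_Suc_right del: funpow.simps)
      show "w \<in> insert a (sanc T a)"
      proof (cases m)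
        case 0 then show ?thesis using w by simp
      next
        case (Suc m')
        have "w \<in> sanc T a" using w sancI[of m a] Suc n m c by simp
        thus ?thesis by simp
      qed
    qed
  next
    show "insert a (sanc T a) \<subseteq> sanc T b"
    proof
      fix w assume "w \<in> insert a (sanc T a)"
      then obtain m where m: "m \<le> D a" "w = (par ^^ m) a"
        by (auto simp: sanc_def) (metis funpow_0 le0)
      have w: "w = (par ^^ Suc m) b" using m c by (simp add: funpow_Suc_right del: funpow.simps)
      have "(par ^^ Suc m) b \<in> sanc T b" by (rule sancI) (use m c in auto)
      thus "w \<in> sanc T b" using w by simp
    qed
  qed
qed

lemma sanc_trans: assumes "x \<in> V" "w \<in> sanc T x" "u \<in> sanc T w" shows "u \<in> sanc T x"
proof -
  obtain n where n: "1 \<le> n" "n \<le> D x" "w = (par ^^ n) x" using assms by (auto simp: sanc_def)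
  have wV: "w \<in> V" "D w = D x - n" using pow_in[OF assms(1) n(2)] n by auto
  obtain m where m: "1 \<le> m" "m \<le> D w" "u = (par ^^ m) w" using assms by (auto simp: sanc_def)
  have "u = (par ^^ (m + n)) x" using m n by (simp add: funpow_add)
  thus ?thesis using m n wV by (auto intro!: sancI)
qed

lemma sanc_cmp: assumes "x \<in> V" "a \<in> sanc T x" "b \<in> sanc T x" "D a < D b"
  shows "a \<in> sanc T b"
proof -
  have a: "a \<in> V" "D a < D x" "a = (par ^^ (D x - D a)) x" using sancD assms by auto
  have b: "b \<in> V" "D b < D x" "b = (par ^^ (D x - D b)) x" using sancD assms by auto
  have "(par ^^ (D b - D a)) b = (par ^^ ((D b - D a) + (D x - D b))) x"
    using b(3) by (simp add: funpow_add)
  also have "(D b - D a) + (D x - D b) = D x - D a" using a b assms by simp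
  finally have e: "(par ^^ (D b - D a)) b = a" using a(3) by simp
  have "(par ^^ (D b - D a)) b \<in> sanc T b" by (rule sancI) (use assms in auto)
  thus ?thesis using e by simp
qed

lemma sanc_same_dep: assumes "x \<in> V" "a \<in> insert x (sanc T x)" "b \<in> insert x (sanc T x)" "D a = D b"
  shows "a = b"
  using assms sancD by (metis insert_iff less_irrefl)

lemma branch_sanc_mem: assumes "is_branch T xs" "i < j" "j < length xs"
  shows "xs ! i \<in> sanc T (xs ! j)"
proof -
  have h: "(par ^^ (j - i)) (xs ! j) = xs ! i" "D (xs ! j) = D (xs ! i) + (j - i)"
    using branch_nth[OF assms(1), of i j] assms by auto
  show ?thesis using sancI[of "j - i" "xs ! j"] h assms by simp
qed

lemma branch_sanc:
  assumes "is_branch T xs" "j < length xs" "y \<in> sanc T (xs ! j)"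
  shows "y \<in> sanc T (hd xs) \<or> (\<exists>i<j. y = xs ! i)"
proof -
  have ne: "xs \<noteq> []" using assms by auto
  have hd: "hd xs = xs ! 0" using ne by (simp add: hd_conv_nth)
  have xjV: "xs ! j \<in> V" using branch_set[OF assms(1)] assms(2) by auto
  have dj: "D (xs ! j) = D (xs ! 0) + j" using branch_nth[OF assms(1), of 0 j] assms by auto
  have yd: "y \<in> V" "D y < D (xs ! j)" using sancD[OF xjV assms(3)] by auto
  show ?thesis
  proof (cases "j = 0")
    case True then show ?thesis using assms hd by simp
  next
    case False
    have h0: "xs ! 0 \<in> sanc T (xs ! j)" using branch_sanc_mem[OF assms(1), of 0 j] False assms by simp
    consider "D y < D (xs ! 0)" | "D (xs ! 0) \<le> D y" by linarith
    then show ?thesis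
    proof cases
      case 1 then show ?thesis using sanc_cmp[OF xjV assms(3) h0] hd by simp
    next
      case 2
      let ?i = "D y - D (xs ! 0)"
      have i: "?i < j" using 2 yd dj by simp
      have di: "D (xs ! ?i) = D (xs ! 0) + ?i" using branch_nth[OF assms(1), of 0 ?i] i assms by auto
      have "xs ! ?i \<in> insert (xs ! j) (sanc T (xs ! j))"
        using branch_sanc_mem[OF assms(1) i assms(2)] by simp
      hence "y = xs ! ?i" using sanc_same_dep[OF xjV, of y "xs ! ?i"] assms(3) di 2 by simp
      thus ?thesis using i by blast
    qed
  qed
qed

lemma child_of_par: "x \<in> V \<Longrightarrow> x \<noteq> rt \<Longrightarrow> x \<in> children T (par x)"
  by (simp add: children_def)

end

locale btr = rtree +
  assumes bt: "burling_tree T"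
begin

lemma tlast_child: "x \<in> V \<Longrightarrow> \<not> is_leaf T x \<Longrightarrow> tlast T x \<in> children T x"
  using bt by (simp add: burling_tree_def)

lemma tc_empty: "x \<in> V \<Longrightarrow> x = rt \<or> is_last_born T x \<Longrightarrow> tc T x = {}"
  using bt unfolding burling_tree_def by blast

lemma tc_branch: "x \<in> V \<Longrightarrow> x \<noteq> rt \<Longrightarrow> \<not> is_last_born T x \<Longrightarrow>
   \<exists>xs. is_branch T xs \<and> (xs = [] \<or> hd xs = tlast T (par x)) \<and> tc T x = set xs"
  using bt by (simp add: burling_tree_def)

lemma tc_ne:
  assumes "x \<in> V" "tc T x \<noteq> {}"
  shows "x \<noteq> rt \<and> \<not> is_last_born T x \<and> tlast T (par x) \<in> children T (par x)
     \<and> (\<exists>xs. is_branch T xs \<and> xs \<noteq> [] \<and> hd xs = tlast T (par x) \<and> tc T x = set xs)"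
proof -
  have a: "x \<noteq> rt" "\<not> is_last_born T x" using tc_empty assms by auto
  have c: "x \<in> children T (par x)" using child_of_par assms a by simp
  have "tlast T (par x) \<in> children T (par x)"
    using tlast_child[of "par x"] c par_in[OF assms(1) a(1)] by (auto simp: is_leaf_def)
  moreover obtain xs where "is_branch T xs" "xs = [] \<or> hd xs = tlast T (par x)" "tc T x = set xs"
    using tc_branch assms a by blast
  ultimately show ?thesis using a assms by auto
qed

lemma tc_sub: "x \<in> V \<Longrightarrow> tc T x \<subseteq> V"
  using tc_ne branch_set by (metis empty_subsetI)

definition fm where
  "fm x = 2 * D x + (if is_last_born T x then 1 else 0)"

lemma tc_fm: assumes "x \<in> V" "y \<in> tc T x" shows "fm x < fm y"
proof -
  have ne: "tc T x \<noteq> {}" using assms by auto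
  from tc_ne[OF assms(1) ne] obtain xs where xs: "is_branch T xs" "xs \<noteq> []"
    "hd xs = tlast T (par x)" "tc T x = set xs" and nr: "x \<noteq> rt" "\<not> is_last_born T x"
    and tl: "tlast T (par x) \<in> children T (par x)" by blast
  have c: "x \<in> children T (par x)" using child_of_par assms nr by simp
  have dh: "D (xs ! 0) = D x" using childD[OF tl] childD[OF c] xs by (simp add: hd_conv_nth)
  obtain j where j: "j < length xs" "y = xs ! j" using assms xs by (metis in_set_conv_nth)
  have dy: "D y = D x + j" using branch_nth[OF xs(1), of 0 j] j dh by simp
  show ?thesis
  proof (cases j)
    case 0
    hence "y = tlast T (par x)" using j xs by (simp add: hd_conv_nth)
    hence "is_last_born T y" using childD[OF tl] by (simp add: is_last_born_def)
    thus ?thesis using nr dy 0 by (simp add: fm_def)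
  next
    case (Suc j') thus ?thesis using nr dy by (simp add: fm_def)
  qed
qed

lemma tc_irrefl: "x \<in> V \<Longrightarrow> x \<notin> tc T x" using tc_fm by blast

lemma tc_sibling_sanc:
  assumes "x \<in> V" "tc T x \<noteq> {}" shows "sanc T (tlast T (par x)) = sanc T x"
proof -
  have a: "x \<noteq> rt" "tlast T (par x) \<in> children T (par x)" using tc_ne assms by auto
  have c: "x \<in> children T (par x)" using child_of_par assms a by simp
  show ?thesis using sanc_child[OF c] sanc_child[OF a(2)] by simp
qed

end

lemma acyclic_measure:
  fixes g :: "'x \<Rightarrow> nat"
  assumes "r \<subseteq> {(a, b). g a < g b}" shows "acyclic r"
proof -
  have "(a, b) \<in> r\<^sup>+ \<Longrightarrow> g a < g b" for a b
    by (induction rule: trancl_induct) (use assms in auto)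
  thus ?thesis unfolding acyclic_def by blast
qed

lemma drop_branch: assumes "is_branch T xs" shows "is_branch T (drop i xs)"
proof -
  have "successively (\<lambda>a b. b \<in> children T a) (take i xs @ drop i xs)"
    using assms by (simp add: is_branch_def)
  hence "successively (\<lambda>a b. b \<in> children T a) (drop i xs)"
    by (simp only: successively_append_iff)
  moreover have "set (drop i xs) \<subseteq> tV T" using assms set_drop_subset[of i xs]
    by (auto simp: is_branch_def)
  ultimately show ?thesis by (simp add: is_branch_def)
qed

lemma nth_in_drop: assumes "i \<le> j" "j < length xs" shows "xs ! j \<in> set (drop i xs)"
proof -
  have "drop i xs ! (j - i) = xs ! j" using assms by simp
  moreover have "j - i < length (drop i xs)" using assms by simp
  ultimately show ?thesis by (metis nth_mem)
qed

lemma Inl_pair_mem: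
  fixes a b :: 'a and A :: "('a \<times> 'a) set"
  shows "((Inl a :: 'a + 'c, Inl b :: 'a + 'c) \<in> map_prod Inl Inl ` A) \<longleftrightarrow> (a, b) \<in> A"
proof -
  have i: "inj (map_prod Inl Inl :: 'a \<times> 'a \<Rightarrow> ('a + 'c) \<times> ('a + 'c))" by (rule injI) auto
  have "((Inl a :: 'a + 'c, Inl b :: 'a + 'c)) = map_prod Inl Inl (a,b)" by simp
  thus ?thesis using inj_image_mem_iff[OF i, of "(a,b)" A] by (simp only:)
qed

lemma derived_Inl:
  fixes T :: "('a + 'c) btree" and G :: "'a ograph"
  shows "derived T (map_graph Inl G) \<longleftrightarrow> Inl ` gV G \<subseteq> tV T \<and> gA G \<subseteq> gV G \<times> gV G
     \<and> (\<forall>a\<in>gV G. \<forall>b\<in>gV G. (a, b) \<in> gA G \<longleftrightarrow> Inl b \<in> tc T (Inl a))" (is "_ \<longleftrightarrow> ?RHS")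
proof -
  define F where "F = {(u, v). u \<in> tV T \<and> v \<in> tV T \<and> v \<in> tc T u} \<inter> (Inl ` gV G \<times> Inl ` gV G)"
  have pm: "\<And>a b. (a,b) \<in> gA G \<longleftrightarrow> (Inl a, Inl b) \<in> (map_prod Inl Inl ` gA G :: (('a+'c) \<times> ('a+'c)) set)"
    by (rule Inl_pair_mem[symmetric])
  have e1: "map_graph Inl G = \<lparr>gV = Inl ` gV G, gA = map_prod Inl Inl ` gA G\<rparr>" by (simp add: map_graph_def)
  have e2: "induced (fully_derived T) (Inl ` gV G) = \<lparr>gV = Inl ` gV G, gA = F\<rparr>"
    by (simp add: induced_def fully_derived_def F_def)
  have "derived T (map_graph Inl G) \<longleftrightarrow> Inl ` gV G \<subseteq> tV T \<and> map_prod Inl Inl ` gA G = F"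
    unfolding derived_def e1 by (simp add: e2)
  also have "\<dots> \<longleftrightarrow> ?RHS" (is "?L \<longleftrightarrow> ?R")
  proof
    assume L: ?L
    hence sub: "Inl ` gV G \<subseteq> tV T" and eq: "map_prod Inl Inl ` gA G = F" by simp_all
    have "gA G \<subseteq> gV G \<times> gV G"
    proof
      fix p assume "p \<in> gA G"
      then obtain a b where p: "p = (a, b)" "(a,b) \<in> gA G" by (cases p) auto
      hence "(Inl a, Inl b) \<in> F" using pm[of a b] unfolding eq by simp
      hence "Inl a \<in> (Inl ` gV G :: ('a + 'c) set)" "Inl b \<in> (Inl ` gV G :: ('a + 'c) set)" unfolding F_def by simp_all
      thus "p \<in> gV G \<times> gV G" using p by (simp add: inj_image_mem_iff)
    qed
    moreover have "\<forall>a\<in>gV G. \<forall>b\<in>gV G. (a, b) \<in> gA G \<longleftrightarrow> Inl b \<in> tc T (Inl a)"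
    proof (intro ballI)
      fix a b assume ab: "a \<in> gV G" "b \<in> gV G"
      have "(a, b) \<in> gA G \<longleftrightarrow> (Inl a, Inl b) \<in> F" using pm[of a b] unfolding eq by simp
      also have "\<dots> \<longleftrightarrow> Inl b \<in> tc T (Inl a)"
      proof -
        have "Inl a \<in> tV T" "Inl b \<in> tV T" using ab sub by auto
        thus ?thesis using ab by (simp add: F_def)
      qed
      finally show "(a, b) \<in> gA G \<longleftrightarrow> Inl b \<in> tc T (Inl a)" .
    qed
    ultimately show ?R using sub by simp
  next
    assume R: ?R
    have R1: "Inl ` gV G \<subseteq> tV T" and R2: "gA G \<subseteq> gV G \<times> gV G"
      and R3: "\<And>a b. a \<in> gV G \<Longrightarrow> b \<in> gV G \<Longrightarrow> (a, b) \<in> gA G \<longleftrightarrow> Inl b \<in> tc T (Inl a)"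
      using R by blast+
    have "map_prod Inl Inl ` gA G = F"
    proof
      show "map_prod Inl Inl ` gA G \<subseteq> F"
      proof
        fix q :: "('a + 'c) \<times> ('a + 'c)" assume "q \<in> map_prod Inl Inl ` gA G"
        then obtain a b where q: "q = (Inl a, Inl b)" "(a, b) \<in> gA G" by auto
        have ab: "a \<in> gV G" "b \<in> gV G" using R2 q(2) by auto
        have t: "Inl b \<in> tc T (Inl a)" using R3[OF ab] q by simp
        have "Inl a \<in> tV T" "Inl b \<in> tV T" using ab R1 by auto
        thus "q \<in> F" using q t ab by (simp add: F_def)
      qed
      show "F \<subseteq> map_prod Inl Inl ` gA G"
      proof
        fix q assume qF: "q \<in> F"
        obtain u v where uv: "q = (u, v)" by (cases q)
        have uv2: "u \<in> Inl ` gV G" "v \<in> Inl ` gV G" "v \<in> tc T u" using qF uv by (simp_all add: F_def)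
        then obtain a b where "u = Inl a" "v = Inl b" "a \<in> gV G" "b \<in> gV G" by blast
        hence q: "q = (Inl a, Inl b)" "a \<in> gV G" "b \<in> gV G" "Inl b \<in> tc T (Inl a)" using uv uv2 by simp_all
        hence "(a, b) \<in> gA G" using R3 by blast
        thus "q \<in> map_prod Inl Inl ` gA G" using q pm[of a b] by simp
      qed
    qed
    thus ?L using R1 by simp
  qed
  finally show ?thesis .
qed

lemma (in rtree) sanc_root[simp]: "sanc T rt = {}" by (simp add: sanc_def)

lemma top_Inl:
  fixes G :: "'a ograph" and T :: "('a + 'c) btree"
  assumes rtT: "rooted_tree T" and "Inl ` gV G \<subseteq> tV T"
  shows "top_set T (map_graph Inl G) = Inl ` {v \<in> gV G. sanc T (Inl v) \<inter> Inl ` gV G = {}}"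
proof -
  interpret rtree T by (rule rtree.intro[OF rtT])
  have key: "(\<forall>xs. is_branch T xs \<and> xs \<noteq> [] \<and> hd xs = rt \<and> last xs = Inl v \<longrightarrow> set xs \<inter> Inl ` gV G = {Inl v})
     \<longleftrightarrow> sanc T (Inl v) \<inter> Inl ` gV G = {}" if v: "v \<in> gV G" for v
  proof -
    have vV: "Inl v \<in> V" using v assms by auto
    have "(\<forall>xs. is_branch T xs \<and> xs \<noteq> [] \<and> hd xs = rt \<and> last xs = Inl v \<longrightarrow> set xs \<inter> Inl ` gV G = {Inl v})
      \<longleftrightarrow> set (anc T (Inl v)) \<inter> Inl ` gV G = {Inl v}"
    proof
      assume "\<forall>xs. is_branch T xs \<and> xs \<noteq> [] \<and> hd xs = rt \<and> last xs = Inl v \<longrightarrow> set xs \<inter> Inl ` gV G = {Inl v}"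
      moreover have "anc T (Inl v) \<noteq> []" using anc_len by (metis length_0_conv nat.distinct(1))
      ultimately show "set (anc T (Inl v)) \<inter> Inl ` gV G = {Inl v}"
        using anc_branch[OF vV] anc_hd[OF vV] anc_last by blast
    next
      assume A: "set (anc T (Inl v)) \<inter> Inl ` gV G = {Inl v}"
      show "\<forall>xs. is_branch T xs \<and> xs \<noteq> [] \<and> hd xs = rt \<and> last xs = Inl v \<longrightarrow> set xs \<inter> Inl ` gV G = {Inl v}"
      proof (intro allI impI)
        fix xs assume xs: "is_branch T xs \<and> xs \<noteq> [] \<and> hd xs = rt \<and> last xs = Inl v"
        hence "xs = anc T (Inl v)" using root_branch[of xs] by metis
        thus "set xs \<inter> Inl ` gV G = {Inl v}" using A by simp
      qed
    qed
    also have "\<dots> \<longleftrightarrow> sanc T (Inl v) \<inter> Inl ` gV G = {}"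
      using sanc_anc[of "Inl v"] sanc_notin[OF vV] v by auto
    finally show ?thesis .
  qed
  have tv: "top_set T (map_graph Inl G) = {w \<in> Inl ` gV G. \<forall>xs. is_branch T xs \<and> xs \<noteq> [] \<and> hd xs = rt \<and> last xs = w
                     \<longrightarrow> set xs \<inter> Inl ` gV G = {w}}"
    by (simp add: top_set_def map_graph_def)
  show ?thesis
  proof (rule set_eqI)
    fix w show "w \<in> top_set T (map_graph Inl G) \<longleftrightarrow> w \<in> Inl ` {v \<in> gV G. sanc T (Inl v) \<inter> Inl ` gV G = {}}"
    proof
      assume "w \<in> top_set T (map_graph Inl G)"
      hence w: "w \<in> Inl ` gV G \<and> (\<forall>xs. is_branch T xs \<and> xs \<noteq> [] \<and> hd xs = rt \<and> last xs = w
                     \<longrightarrow> set xs \<inter> Inl ` gV G = {w})" unfolding tv by (rule CollectD)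
      then obtain v where v: "w = Inl v" "v \<in> gV G" by blast
      have "sanc T (Inl v) \<inter> Inl ` gV G = {}" using key[OF v(2)] w v(1) by simp
      thus "w \<in> Inl ` {v \<in> gV G. sanc T (Inl v) \<inter> Inl ` gV G = {}}" using v by simp
    next
      assume "w \<in> Inl ` {v \<in> gV G. sanc T (Inl v) \<inter> Inl ` gV G = {}}"
      then obtain v where v: "w = Inl v" "v \<in> gV G" "sanc T (Inl v) \<inter> Inl ` gV G = {}" by blast
      have "w \<in> Inl ` gV G \<and> (\<forall>xs. is_branch T xs \<and> xs \<noteq> [] \<and> hd xs = rt \<and> last xs = w
                     \<longrightarrow> set xs \<inter> Inl ` gV G = {w})" using key[OF v(2)] v by simp
      thus "w \<in> top_set T (map_graph Inl G)" unfolding tv by (rule CollectI)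
    qed
  qed
qed

definition subT :: "'b btree \<Rightarrow> 'b \<Rightarrow> 'b btree" where
  "subT T w = \<lparr>tV = insert w {y \<in> tV T. w \<in> sanc T y}, troot = w, tpar = tpar T,
      tlast = tlast T, tc = (tc T)(w := {})\<rparr>"

context btr begin

abbreviation "Sw w \<equiv> subT T w"

lemma subT_simps[simp]: "tV (Sw w) = insert w {y \<in> V. w \<in> sanc T y}" "troot (Sw w) = w"
  "tpar (Sw w) = par" "tlast (Sw w) = tlast T" "tc (Sw w) = (tc T)(w := {})"
  by (simp_all add: subT_def)

lemma sub_V: "w \<in> V \<Longrightarrow> tV (Sw w) \<subseteq> V" by auto

lemma sub_children: assumes "w \<in> V" "a \<in> tV (Sw w)" shows "children (Sw w) a = children T a"
proof
  show "children (Sw w) a \<subseteq> children T a"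
  proof
    fix b assume b: "b \<in> children (Sw w) a"
    hence b': "b \<in> V" "w \<in> sanc T b" "par b = a" "b \<noteq> w" by (auto simp: children_def)
    have "b \<noteq> rt" using sancD[OF b'(1,2)] by auto
    thus "b \<in> children T a" using b' by (simp add: children_def)
  qed
next
  show "children T a \<subseteq> children (Sw w) a"
  proof
    fix b assume b: "b \<in> children T a"
    have s: "sanc T b = insert a (sanc T a)" using sanc_child[OF b] .
    have bV: "b \<in> V" using childD[OF b] by simp
    have ws: "w \<in> sanc T b" using s assms by auto
    have "b \<noteq> w" using ws sanc_notin[OF bV] by auto
    thus "b \<in> children (Sw w) a" using b ws bV childD[OF b] by (simp add: children_def)
  qed
qed

lemma sub_branch_T: assumes "w \<in> V" "is_branch (Sw w) xs" shows "is_branch T xs"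
proof -
  have s: "set xs \<subseteq> tV (Sw w)" using assms by (simp add: is_branch_def)
  have "successively (\<lambda>a b. b \<in> children T a) xs"
    using assms(2) unfolding is_branch_def
    by (elim conjE successively_mono) (use s sub_children[OF assms(1)] in auto)
  thus ?thesis using s sub_V[OF assms(1)] by (auto simp: is_branch_def)
qed

lemma T_branch_sub: assumes "w \<in> V" "is_branch T xs" "xs = [] \<or> hd xs \<in> tV (Sw w)"
  shows "is_branch (Sw w) xs"
proof (cases "xs = []")
  case True then show ?thesis by (simp add: is_branch_def)
next
  case False
  have s: "set xs \<subseteq> tV (Sw w)"
    apply (rule succ_closed[of T xs])
    using assms False sub_children[OF assms(1)] by (auto simp: is_branch_def children_def)
  have "successively (\<lambda>a b. b \<in> children (Sw w) a) xs"
    using assms(2) unfolding is_branch_def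
    by (elim conjE successively_mono) (use s sub_children[OF assms(1)] in auto)
  thus ?thesis using s by (auto simp: is_branch_def)
qed

lemma sub_rooted: assumes "w \<in> V" shows "rooted_tree (Sw w)"
  unfolding rooted_tree_def
proof (intro conjI ballI)
  show "finite (tV (Sw w))" using finV by simp
  show "troot (Sw w) \<in> tV (Sw w)" by simp
next
  fix y assume y: "y \<in> tV (Sw w) - {troot (Sw w)}"
  hence y': "y \<in> V" "w \<in> sanc T y" by auto
  have nr: "y \<noteq> rt" using sancD[OF y'] by auto
  have s: "sanc T y = insert (par y) (sanc T (par y))" using sanc_child[OF child_of_par[OF y'(1) nr]] .
  show "tpar (Sw w) y \<in> tV (Sw w)" using s y' par_in[OF y'(1) nr] by auto
next
  fix y assume y: "y \<in> tV (Sw w)"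
  show "\<exists>n. (tpar (Sw w) ^^ n) y = troot (Sw w)"
  proof (cases "y = w")
    case True then show ?thesis by (metis funpow_0 subT_simps(2))
  next
    case False then show ?thesis using y by (auto simp: sanc_def)
  qed
qed

lemma sub_burling: assumes "w \<in> V" shows "burling_tree (Sw w)"
  unfolding burling_tree_def
proof (intro conjI ballI impI)
  show "rooted_tree (Sw w)" using sub_rooted[OF assms] .
next
  fix v assume v: "v \<in> tV (Sw w)" "\<not> is_leaf (Sw w) v"
  then show "tlast (Sw w) v \<in> children (Sw w) v"
    using tlast_child[of v] sub_children[OF assms v(1)] sub_V[OF assms] by (auto simp: is_leaf_def)
next
  fix v assume v: "v \<in> tV (Sw w)" "v = troot (Sw w) \<or> is_last_born (Sw w) v"
  show "tc (Sw w) v = {}"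
  proof (cases "v = w")
    case True then show ?thesis by simp
  next
    case False
    hence v': "v \<in> V" "w \<in> sanc T v" using v by auto
    have "v \<noteq> rt" using sancD[OF v'] by auto
    hence "is_last_born T v" using v False by (simp add: is_last_born_def)
    then show ?thesis using tc_empty v' by simp
  qed
next
  fix v assume v: "v \<in> tV (Sw w)" "v \<noteq> troot (Sw w) \<and> \<not> is_last_born (Sw w) v"
  hence v': "v \<in> V" "w \<in> sanc T v" "v \<noteq> w" by auto
  have nr: "v \<noteq> rt" using sancD[OF v'(1,2)] by auto
  have nl: "\<not> is_last_born T v" using v nr v' by (auto simp: is_last_born_def)
  obtain xs where xs: "is_branch T xs" "xs = [] \<or> hd xs = tlast T (par v)" "tc T v = set xs"
    using tc_branch[OF v'(1) nr nl] by blast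
  have pv: "par v \<in> tV (Sw w)"
    using sub_rooted[OF assms] v unfolding rooted_tree_def by auto
  have "xs = [] \<or> hd xs \<in> tV (Sw w)"
  proof (cases "xs = []")
    case False
    have "tc T v \<noteq> {}" using xs False by simp
    hence "tlast T (par v) \<in> children T (par v)" using tc_ne v' by blast
    hence "tlast T (par v) \<in> children (Sw w) (par v)" using sub_children[OF assms pv] by simp
    thus ?thesis using xs False by (auto simp: children_def)
  qed simp
  hence "is_branch (Sw w) xs" using T_branch_sub[OF assms xs(1)] by simp
  thus "\<exists>xs. is_branch (Sw w) xs \<and> (xs = [] \<or> hd xs = tlast (Sw w) (tpar (Sw w) v)) \<and> tc (Sw w) v = set xs"
    using xs v' by auto
qed

end


lemma btr_of: "burling_tree T \<Longrightarrow> btr T"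
  by (simp add: btr_def btr_axioms_def rtree_def burling_tree_def)

lemma fwd:
  fixes T :: "('a + 'c) btree" and G :: "'a ograph"
  assumes "burling_tree T" "k_burling_derived k T (map_graph Inl G)"
  shows "\<exists>Ss. kseq_base k G Ss (induced G {v \<in> gV G. sanc T (Inl v) \<inter> Inl ` gV G = {}})
     \<and> (\<forall>xs. is_branch T xs \<and> (xs = [] \<or> hd xs = troot T) \<longrightarrow> {x \<in> gV G. Inl x \<in> set xs} \<in> Ss)"
  using assms
proof (induction k arbitrary: T G)
  case 0
  interpret btr T using btr_of[OF 0(1)] .
  have d: "Inl ` gV G \<subseteq> V" "gA G \<subseteq> gV G \<times> gV G"
    using 0(2) unfolding k_burling_derived_def derived_Inl by auto
  have kb: "\<And>xs. is_branch T xs \<Longrightarrow> card (set xs \<inter> Inl ` gV G) \<le> 0"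
    using 0(2) by (simp add: k_burling_derived_def map_graph_def)
  have e: "gV G = {}"
  proof (rule ccontr)
    assume "gV G \<noteq> {}" then obtain v where v: "v \<in> gV G" by blast
    have "is_branch T [Inl v]" using d v by (auto simp: is_branch_def)
    note kb[OF this]
    thus False using v by simp
  qed
  have "gA G = {}" using d e by auto
  hence G: "G = empty_graph" using e by (cases G) (simp add: empty_graph_def)
  have H: "induced G {v \<in> gV G. sanc T (Inl v) \<inter> Inl ` gV G = {}} = empty_graph"
    using e \<open>gA G = {}\<close> by (simp add: induced_def empty_graph_def)
  show ?case
    by (rule exI[of _ "{{}}"]) (unfold kseq_base.simps H, use G e in simp)
next
  case (Suc k)
  interpret btr T using btr_of[OF Suc.prems(1)] .
  define Gv where "Gv = (Inl ` gV G :: ('a + 'c) set)"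
  have GV: "Gv \<subseteq> V" and GA: "gA G \<subseteq> gV G \<times> gV G"
    and arc: "\<And>a b. a \<in> gV G \<Longrightarrow> b \<in> gV G \<Longrightarrow> (a, b) \<in> gA G \<longleftrightarrow> Inl b \<in> tc T (Inl a)"
    using Suc.prems(2) unfolding k_burling_derived_def derived_Inl Gv_def by blast+
  have kb: "\<And>xs. is_branch T xs \<Longrightarrow> card (set xs \<inter> Gv) \<le> Suc k"
    using Suc.prems(2) by (simp add: k_burling_derived_def map_graph_def Gv_def)
  have inV: "\<And>x. x \<in> gV G \<Longrightarrow> Inl x \<in> V" using GV Gv_def by auto
  have inGv: "\<And>x. Inl x \<in> Gv \<longleftrightarrow> x \<in> gV G" using Gv_def by auto
  have finGv: "finite Gv" using finite_subset[OF GV finV] .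
  have finG: "finite (gV G)" using finGv unfolding Gv_def by (rule finite_imageD) simp
  define S where "S = {v \<in> gV G. sanc T (Inl v) \<inter> Gv = {}}"
  define B where "B s = {x \<in> gV G. Inl s \<in> sanc T (Inl x)}" for s
  define Hs where "Hs s = induced G (B s)" for s
  define R where "R u = {x \<in> gV G - S. Inl x \<in> tc T (Inl u)}" for u
  have S_eq: "{v \<in> gV G. sanc T (Inl v) \<inter> Inl ` gV G = {}} = S" unfolding S_def Gv_def ..
  have S_sub: "S \<subseteq> gV G" and B_sub: "\<And>s. B s \<subseteq> gV G" unfolding S_def B_def by auto
  have HV: "gV (induced G S) = S" and HA: "gA (induced G S) = gA G \<inter> S \<times> S"
    by (simp_all add: induced_def)
  have HsV: "\<And>s. gV (Hs s) = B s" and HsA: "\<And>s. gA (Hs s) = gA G \<inter> B s \<times> B s"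
    by (simp_all add: induced_def Hs_def)
  have B_notS: "\<And>s x. x \<in> B s \<Longrightarrow> s \<in> gV G \<Longrightarrow> x \<notin> S"
    unfolding B_def S_def using inGv by blast
  have B_uniq: "s = s'" if s: "s \<in> S" "s' \<in> S" "x \<in> B s" "x \<in> B s'" for s s' x
  proof -
    have x: "x \<in> gV G" "Inl s \<in> sanc T (Inl x)" "Inl s' \<in> sanc T (Inl x)" using s B_def by auto
    have xV: "Inl x \<in> V" using inV x by simp
    have sG: "Inl s \<in> Gv" "Inl s' \<in> Gv" using s S_def inGv by auto
    consider "D (Inl s) < D (Inl s')" | "D (Inl s') < D (Inl s)" | "D (Inl s) = D (Inl s')" by linarith
    then show ?thesis
    proof cases
      case 1
      hence "Inl s \<in> sanc T (Inl s')" using sanc_cmp[OF xV x(2,3)] by simp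
      thus ?thesis using s(2) sG S_def by auto
    next
      case 2
      hence "Inl s' \<in> sanc T (Inl s)" using sanc_cmp[OF xV x(3,2)] by simp
      thus ?thesis using s(1) sG S_def by auto
    next
      case 3
      thus ?thesis using sanc_same_dep[OF xV, of "Inl s" "Inl s'"] x by simp
    qed
  qed
  have B_ex: "\<exists>s\<in>S. x \<in> B s" if x: "x \<in> gV G" "x \<notin> S" for x
  proof -
    define M where "M = sanc T (Inl x) \<inter> Gv"
    have Mne: "M \<noteq> {}" using x S_def M_def by auto
    have Mfin: "finite M" using finGv M_def by simp
    obtain y where y: "y \<in> M" "D y = Min (D ` M)"
      using Min_in[of "D ` M"] Mne Mfin by (metis (no_types, lifting) empty_is_image finite_imageI imageE)
    have ymin: "\<And>z. z \<in> M \<Longrightarrow> D y \<le> D z" using y Mfin by simp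
    obtain s where s: "y = Inl s" "s \<in> gV G" using y M_def Gv_def by auto
    have xV: "Inl x \<in> V" using inV x by simp
    have "s \<in> S"
    proof (rule ccontr)
      assume "s \<notin> S"
      then obtain z where z: "z \<in> sanc T (Inl s)" "z \<in> Gv" using s S_def by auto
      have "z \<in> sanc T (Inl x)" using sanc_trans[OF xV _ z(1)] y s M_def by simp
      hence "z \<in> M" using z M_def by simp
      hence "D y \<le> D z" by (rule ymin)
      moreover have "D z < D y" using sancD[OF inV[OF s(2)] z(1)] s by simp
      ultimately show False by simp
    qed
    moreover have "x \<in> B s" using x y s M_def B_def by simp
    ultimately show ?thesis by blast
  qed
  have tcS: "\<exists>xs. is_branch T xs \<and> xs \<noteq> [] \<and> tc T (Inl a) = set xs \<and> sanc T (hd xs) = sanc T (Inl a)"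
    if ta: "a \<in> gV G" "tc T (Inl a) \<noteq> {}" for a
  proof -
    have aV: "Inl a \<in> V" using inV ta by simp
    obtain xs where "is_branch T xs" "xs \<noteq> []" "hd xs = tlast T (par (Inl a))" "tc T (Inl a) = set xs"
      using tc_ne[OF aV ta(2)] by blast
    thus ?thesis using tc_sibling_sanc[OF aV ta(2)] by auto
  qed
  have before: "\<exists>i<j. z = xs ! i"
    if "u \<in> S" "is_branch T xs" "sanc T (hd xs) = sanc T (Inl u)" "j < length xs"
       "z \<in> sanc T (xs ! j)" "z \<in> Gv" for u xs j z
    using branch_sanc[OF that(2,4,5)] that S_def by auto
  have IHv: "\<exists>Ss'. kseq_base k (Hs v) Ss' (induced (Hs v) {x \<in> gV (Hs v). sanc (Sw (Inl v)) (Inl x) \<inter> Inl ` gV (Hs v) = {}})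
     \<and> (\<forall>ys. is_branch (Sw (Inl v)) ys \<and> (ys = [] \<or> hd ys = troot (Sw (Inl v))) \<longrightarrow> {x \<in> gV (Hs v). Inl x \<in> set ys} \<in> Ss')"
    if v: "v \<in> S" for v
  proof (rule Suc.IH)
    have vV: "Inl v \<in> V" using v S_sub inV by auto
    show "burling_tree (Sw (Inl v))" by (rule sub_burling[OF vV])
    have d1: "Inl ` gV (Hs v) \<subseteq> tV (Sw (Inl v))" using inV by (auto simp: HsV B_def)
    have d2: "gA (Hs v) \<subseteq> gV (Hs v) \<times> gV (Hs v)" by (auto simp: HsV HsA)
    have d3: "(a, b) \<in> gA (Hs v) \<longleftrightarrow> Inl b \<in> tc (Sw (Inl v)) (Inl a)" if ab: "a \<in> gV (Hs v)" "b \<in> gV (Hs v)" for a b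
    proof -
      have "a \<notin> S" using B_notS ab v S_sub HsV by auto
      hence "a \<noteq> v" using v by auto
      thus ?thesis using ab arc[of a b] B_sub by (auto simp: HsV HsA)
    qed
    have d4: "card (set ys \<inter> Inl ` gV (Hs v)) \<le> k" if ys: "is_branch (Sw (Inl v)) ys" for ys
    proof (cases "ys = []")
      case True then show ?thesis by simp
    next
      case False
      have yT: "is_branch T ys" using sub_branch_T[OF vV ys] .
      obtain y0 ys' where yeq: "ys = y0 # ys'" using False by (cases ys) auto
      have hs: "y0 \<in> tV (Sw (Inl v))" using ys yeq unfolding is_branch_def by simp
      have hV: "y0 \<in> V" using hs sub_V[OF vV] by auto
      define zs where "zs = anc T y0 @ ys'"
      have zsb: "is_branch T zs"
      proof -
        have a: "is_branch T (anc T y0)" by (rule anc_branch[OF hV])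
        have t: "is_branch T ys'" using drop_branch[OF yT, of 1] yeq by simp
        have sc: "successively (\<lambda>a b. b \<in> children T a) (y0 # ys')" using yT yeq by (simp add: is_branch_def)
        have "ys' = [] \<or> hd ys' \<in> children T y0"
          using sc unfolding successively_Cons by blast
        moreover have "anc T y0 \<noteq> []" using anc_len[of y0] by (metis length_0_conv nat.distinct(1))
        ultimately show ?thesis using a t unfolding zs_def is_branch_def
          by (simp add: successively_append_iff anc_last)
      qed
      have vz: "Inl v \<in> set zs"
      proof -
        have "Inl v \<in> insert y0 (sanc T y0)" using hs by auto
        thus ?thesis unfolding zs_def set_append sanc_anc[of y0] by blast
      qed
      have sub: "set ys \<inter> Inl ` gV (Hs v) \<subseteq> (set zs \<inter> Gv) - {Inl v}"
      proof -
        have "set ys \<subseteq> set zs" unfolding zs_def using yeq sanc_anc[of y0] by auto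
        moreover have "Inl v \<notin> Inl ` gV (Hs v)" using B_notS v S_sub HsV by auto
        moreover have "Inl ` gV (Hs v) \<subseteq> Gv" using B_sub HsV Gv_def by auto
        ultimately show ?thesis by blast
      qed
      have "card (set ys \<inter> Inl ` gV (Hs v)) \<le> card ((set zs \<inter> Gv) - {Inl v})"
        by (rule card_mono[OF _ sub]) simp
      also have "\<dots> = card (set zs \<inter> Gv) - 1"
        using vz v S_sub inGv by (subst card_Diff_singleton) auto
      also have "\<dots> \<le> k" using kb[OF zsb] by simp
      finally show ?thesis .
    qed
    show "k_burling_derived k (Sw (Inl v)) (map_graph Inl (Hs v))"
      unfolding k_burling_derived_def derived_Inl
      using d1 d2 d3 d4 by (simp add: map_graph_def)
  qed
  obtain Rs where Rs: "\<And>v. v \<in> S \<Longrightarrow> (\<exists>H'. kseq_base k (Hs v) (Rs v) H')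
     \<and> (\<forall>ys. is_branch (Sw (Inl v)) ys \<and> (ys = [] \<or> hd ys = Inl v) \<longrightarrow> {x \<in> B v. Inl x \<in> set ys} \<in> Rs v)"
  proof -
    have "\<forall>v\<in>S. \<exists>Ss'. (\<exists>H'. kseq_base k (Hs v) Ss' H')
     \<and> (\<forall>ys. is_branch (Sw (Inl v)) ys \<and> (ys = [] \<or> hd ys = Inl v) \<longrightarrow> {x \<in> B v. Inl x \<in> set ys} \<in> Ss')"
    proof
      fix v assume v: "v \<in> S"
      from IHv[OF v] obtain Ss' where o1: "kseq_base k (Hs v) Ss' (induced (Hs v) {x \<in> gV (Hs v). sanc (Sw (Inl v)) (Inl x) \<inter> Inl ` gV (Hs v) = {}})"
        and o2: "\<forall>ys. is_branch (Sw (Inl v)) ys \<and> (ys = [] \<or> hd ys = troot (Sw (Inl v))) \<longrightarrow> {x \<in> gV (Hs v). Inl x \<in> set ys} \<in> Ss'"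
        by blast
      have h2: "\<forall>ys. is_branch (Sw (Inl v)) ys \<and> (ys = [] \<or> hd ys = Inl v) \<longrightarrow> {x \<in> B v. Inl x \<in> set ys} \<in> Ss'"
        using o2 by (simp only: HsV subT_simps(2))
      show "\<exists>Ss'. (\<exists>H'. kseq_base k (Hs v) Ss' H')
     \<and> (\<forall>ys. is_branch (Sw (Inl v)) ys \<and> (ys = [] \<or> hd ys = Inl v) \<longrightarrow> {x \<in> B v. Inl x \<in> set ys} \<in> Ss')"
        using o1 h2 by blast
    qed
    from bchoice[OF this] obtain f where f: "\<forall>v\<in>S. (\<exists>H'. kseq_base k (Hs v) (f v) H')
     \<and> (\<forall>ys. is_branch (Sw (Inl v)) ys \<and> (ys = [] \<or> hd ys = Inl v) \<longrightarrow> {x \<in> B v. Inl x \<in> set ys} \<in> f v)"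
      by blast
    show ?thesis by (rule that) (rule f[rule_format])
  qed
  have Harc: "Inl u \<in> V \<and> Inl v \<in> tc T (Inl u) \<and> u \<in> S \<and> v \<in> S" if "(u, v) \<in> gA (induced G S)" for u v
    using that arc[of u v] S_sub inV by (auto simp: HA)
  have in_f: "in_forest (induced G S)"
    unfolding in_forest_def
  proof (intro conjI allI impI)
    have fmlt: "fm (Inl u) < fm (Inl v)" if "(u, v) \<in> gA (induced G S)" for u v
      using Harc[OF that] tc_fm by blast
    show "oriented_graph (induced G S)"
      unfolding oriented_graph_def
    proof (intro conjI allI impI)
      show "finite (gV (induced G S))" using finG S_sub HV finite_subset by auto
      show "gA (induced G S) \<subseteq> gV (induced G S) \<times> gV (induced G S)" by (auto simp: HA HV)
      fix u show "(u, u) \<notin> gA (induced G S)" using fmlt by blast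
    next
      fix u v assume "(u, v) \<in> gA (induced G S)"
      thus "(v, u) \<notin> gA (induced G S)" using fmlt by (meson less_asym)
    qed
    show "acyclic (gA (induced G S))"
      by (rule acyclic_measure[of _ "\<lambda>x. fm (Inl x)"]) (use fmlt in auto)
  next
    fix u v w assume uv: "(u, v) \<in> gA (induced G S)" and uw: "(u, w) \<in> gA (induced G S)"
    have h1: "Inl u \<in> V" "Inl v \<in> tc T (Inl u)" "u \<in> S" "v \<in> S" using Harc[OF uv] by auto
    have h2: "Inl w \<in> tc T (Inl u)" "w \<in> S" using Harc[OF uw] by auto
    obtain xs where xs: "is_branch T xs" "xs \<noteq> []" "tc T (Inl u) = set xs" "sanc T (hd xs) = sanc T (Inl u)"
      using tcS[of u] h1 S_sub by blast
    obtain i where i: "i < length xs" "xs ! i = Inl v" using h1 xs by (metis in_set_conv_nth)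
    obtain j where j: "j < length xs" "xs ! j = Inl w" using h2 xs by (metis in_set_conv_nth)
    have vG: "Inl v \<in> Gv" "Inl w \<in> Gv" using h1 h2 S_sub inGv by auto
    consider "i < j" | "j < i" | "i = j" by linarith
    then show "v = w"
    proof cases
      case 1
      have "Inl v \<in> sanc T (Inl w)" using branch_sanc_mem[OF xs(1) 1 j(1)] i j by simp
      thus ?thesis using vG h2 S_def by auto
    next
      case 2
      have "Inl w \<in> sanc T (Inl v)" using branch_sanc_mem[OF xs(1) 2 i(1)] i j by simp
      thus ?thesis using vG h1 S_def by auto
    qed (use i j in simp)
  qed
  have arcs: "gA G = gA (induced G S) \<union> (\<Union>v\<in>S. gA (Hs v)) \<union> {(u, x). \<exists>v. (u, v) \<in> gA (induced G S) \<and> x \<in> R u}"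
  proof (rule set_eqI, rule iffI)
    fix p assume p: "p \<in> gA G"
    obtain a b where ab: "p = (a, b)" by (cases p)
    have abG: "a \<in> gV G" "b \<in> gV G" using GA p ab by auto
    have t: "Inl b \<in> tc T (Inl a)" using arc[OF abG] p ab by simp
    have tne: "tc T (Inl a) \<noteq> {}" using t by auto
    obtain xs where xs: "is_branch T xs" "xs \<noteq> []" "tc T (Inl a) = set xs" "sanc T (hd xs) = sanc T (Inl a)"
      using tcS[OF abG(1) tne] by blast
    obtain j where j: "j < length xs" "xs ! j = Inl b" using t xs by (metis in_set_conv_nth)
    show "p \<in> gA (induced G S) \<union> (\<Union>v\<in>S. gA (Hs v)) \<union> {(u, x). \<exists>v. (u, v) \<in> gA (induced G S) \<and> x \<in> R u}"
    proof (cases "a \<in> S")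
      case aS: True
      show ?thesis
      proof (cases "b \<in> S")
        case True then show ?thesis using aS p ab by (simp add: HA)
      next
        case bS: False
        obtain s where s: "s \<in> S" "b \<in> B s" using B_ex[OF abG(2) bS] by blast
        have sj: "Inl s \<in> sanc T (xs ! j)" using s j B_def by simp
        have sG: "Inl s \<in> Gv" using s S_sub inGv by auto
        obtain i where "i < j" "Inl s = xs ! i" using before[OF aS xs(1) xs(4) j(1) sj sG] by blast
        hence "Inl s \<in> tc T (Inl a)" using xs j by simp
        hence "(a, s) \<in> gA G" using arc[of a s] abG s S_sub by auto
        hence "(a, s) \<in> gA (induced G S)" using aS s by (simp add: HA)
        moreover have "b \<in> R a" using abG bS t R_def by simp
        ultimately show ?thesis using ab by blast
      qed
    next
      case aS: False
      obtain s where s: "s \<in> S" "a \<in> B s" using B_ex[OF abG(1) aS] by blast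
      have aV: "Inl a \<in> V" using inV abG by simp
      have s0: "Inl s \<in> sanc T (xs ! 0)" using s B_def xs(4) xs(2) by (simp add: hd_conv_nth)
      have "Inl s \<in> sanc T (xs ! j)"
      proof (cases "j = 0")
        case True then show ?thesis using s0 by simp
      next
        case False
        have "xs ! 0 \<in> sanc T (xs ! j)" using branch_sanc_mem[OF xs(1), of 0 j] False j by simp
        moreover have "xs ! j \<in> V" using branch_set[OF xs(1)] nth_mem[OF j(1)] by blast
        ultimately show ?thesis using sanc_trans s0 by blast
      qed
      hence "b \<in> B s" using j abG B_def by simp
      hence "(a, b) \<in> gA (Hs s)" using s p ab by (simp add: HsA)
      thus ?thesis using s ab by blast
    qed
  next
    fix p assume "p \<in> gA (induced G S) \<union> (\<Union>v\<in>S. gA (Hs v)) \<union> {(u, x). \<exists>v. (u, v) \<in> gA (induced G S) \<and> x \<in> R u}"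
    then consider "p \<in> gA (induced G S)" | v where "v \<in> S" "p \<in> gA (Hs v)"
      | u x v where "p = (u, x)" "(u, v) \<in> gA (induced G S)" "x \<in> R u" by blast
    then show "p \<in> gA G"
    proof cases
      case 1 then show ?thesis by (simp add: HA)
    next
      case 2 then show ?thesis by (simp add: HsA)
    next
      case 3
      have "u \<in> gV G" using 3 S_sub by (auto simp: HA)
      thus ?thesis using 3 arc[of u x] R_def by auto
    qed
  qed
  have Rin: "R u \<in> Rs v" if uv: "(u, v) \<in> gA (induced G S)" for u v
  proof -
    have h: "Inl u \<in> V" "Inl v \<in> tc T (Inl u)" "u \<in> S" "v \<in> S" using Harc[OF uv] by auto
    have vV: "Inl v \<in> V" using h S_sub inV by auto
    obtain xs where xs: "is_branch T xs" "xs \<noteq> []" "tc T (Inl u) = set xs" "sanc T (hd xs) = sanc T (Inl u)"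
      using tcS[of u] h S_sub by blast
    obtain i where i: "i < length xs" "xs ! i = Inl v" using h xs by (metis in_set_conv_nth)
    define ys where "ys = drop i xs"
    have ysT: "is_branch T ys" using drop_branch[OF xs(1)] ys_def by simp
    have hy: "hd ys = Inl v" using i ys_def by (simp add: hd_drop_conv_nth)
    have ysS: "is_branch (Sw (Inl v)) ys" using T_branch_sub[OF vV ysT] hy by simp
    have inR: "{x \<in> B v. Inl x \<in> set ys} \<in> Rs v" using Rs[OF h(4)] ysS hy by blast
    have "R u = {x \<in> B v. Inl x \<in> set ys}"
    proof (rule set_eqI, rule iffI)
      fix x assume x: "x \<in> R u"
      hence x': "x \<in> gV G" "x \<notin> S" "Inl x \<in> set xs" using R_def xs by auto
      obtain j where j: "j < length xs" "xs ! j = Inl x" using x' by (metis in_set_conv_nth)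
      have "i \<noteq> j" using i j x' h by auto
      moreover have "\<not> j < i"
      proof
        assume "j < i"
        hence "Inl x \<in> sanc T (Inl v)" using branch_sanc_mem[OF xs(1) _ i(1)] i j by metis
        thus False using h(4) x' S_def inGv by auto
      qed
      ultimately have ij: "i < j" by simp
      have "Inl v \<in> sanc T (Inl x)" using branch_sanc_mem[OF xs(1) ij j(1)] i j by simp
      moreover have "Inl x \<in> set ys" using nth_in_drop[of i j xs] ij j ys_def by simp
      ultimately show "x \<in> {x \<in> B v. Inl x \<in> set ys}" using x' B_def by simp
    next
      fix x assume x: "x \<in> {x \<in> B v. Inl x \<in> set ys}"
      have "x \<notin> S" using B_notS x h S_sub by auto
      moreover have "Inl x \<in> set xs" using x ys_def set_drop_subset by fastforce
      ultimately show "x \<in> R u" using x B_def R_def xs by simp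
    qed
    thus ?thesis using inR by simp
  qed
  define Ss where "Ss = {{}} \<union> {insert v X | v X. v \<in> S \<and> X \<in> Rs v}"
  have kseq: "kseq_base (Suc k) G Ss (induced G S)"
    unfolding kseq_base.simps
  proof (intro conjI exI[of _ Hs] exI[of _ Rs] exI[of _ R])
    show "in_forest (induced G S)" by (rule in_f)
    show "\<forall>v\<in>gV (induced G S). \<exists>H'. kseq_base k (Hs v) (Rs v) H'" using Rs HV by blast
    show "\<forall>v\<in>gV (induced G S). gV (Hs v) \<inter> gV (induced G S) = {}" using B_notS S_sub by (auto simp: HV HsV)
    show "\<forall>v\<in>gV (induced G S). \<forall>w\<in>gV (induced G S). v \<noteq> w \<longrightarrow> gV (Hs v) \<inter> gV (Hs w) = {}"
      using B_uniq by (auto simp: HV HsV)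
    show "\<forall>u v. (u, v) \<in> gA (induced G S) \<longrightarrow> R u \<in> Rs v" using Rin by blast
    show "gV G = gV (induced G S) \<union> (\<Union>v\<in>gV (induced G S). gV (Hs v))"
      using B_ex S_sub B_sub unfolding HV HsV by blast
    show "gA G = gA (induced G S) \<union> (\<Union>v\<in>gV (induced G S). gA (Hs v)) \<union> {(u, x). \<exists>v. (u, v) \<in> gA (induced G S) \<and> x \<in> R u}"
      using arcs by (simp add: HV)
    show "Ss = {{}} \<union> {insert v X |v X. v \<in> gV (induced G S) \<and> X \<in> Rs v}" by (simp add: Ss_def HV)
  qed
  have inv: "{x \<in> gV G. Inl x \<in> set xs} \<in> Ss" if xs: "is_branch T xs" "xs = [] \<or> hd xs = rt" for xs
  proof (cases "{x \<in> gV G. Inl x \<in> set xs} = {}")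
    case True then show ?thesis by (simp add: Ss_def)
  next
    case False
    then obtain x0 where x0: "x0 \<in> gV G" "Inl x0 \<in> set xs" by blast
    have ne: "xs \<noteq> []" using x0 by auto
    have hd0: "xs ! 0 = rt" using xs ne by (simp add: hd_conv_nth)
    define P where "P i = (i < length xs \<and> xs ! i \<in> Gv)" for i
    have exP: "\<exists>i. P i" using x0 inGv P_def by (metis in_set_conv_nth)
    define i0 where "i0 = (LEAST i. P i)"
    have Pi0: "P i0" using LeastI_ex[OF exP] i0_def by simp
    have mini: "\<And>i. P i \<Longrightarrow> i0 \<le> i" using Least_le i0_def by metis
    obtain v where v: "xs ! i0 = Inl v" "v \<in> gV G" using Pi0 P_def Gv_def by auto
    have xsV: "\<And>i. i < length xs \<Longrightarrow> xs ! i \<in> V" using branch_set[OF xs(1)] by auto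
    have vS: "v \<in> S"
    proof -
      have "sanc T (Inl v) \<inter> Gv = {}"
      proof (rule ccontr)
        assume "sanc T (Inl v) \<inter> Gv \<noteq> {}"
        then obtain z where z: "z \<in> sanc T (xs ! i0)" "z \<in> Gv" using v by auto
        have "z \<in> sanc T (hd xs) \<or> (\<exists>i<i0. z = xs ! i)" using branch_sanc[OF xs(1) _ z(1)] Pi0 P_def by simp
        moreover have "sanc T (hd xs) = {}" using xs ne by simp
        ultimately obtain i where "i < i0" "z = xs ! i" by blast
        hence "P i" using z Pi0 P_def by simp
        thus False using mini \<open>i < i0\<close> by fastforce
      qed
      thus ?thesis using v S_def by simp
    qed
    have vV: "Inl v \<in> V" using v inV by simp
    define ys where "ys = drop i0 xs"
    have ysT: "is_branch T ys" using drop_branch[OF xs(1)] ys_def by simp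
    have hy: "hd ys = Inl v" using Pi0 P_def v ys_def by (simp add: hd_drop_conv_nth)
    have ysS: "is_branch (Sw (Inl v)) ys" using T_branch_sub[OF vV ysT] hy by simp
    have inR: "{x \<in> B v. Inl x \<in> set ys} \<in> Rs v" using Rs[OF vS] ysS hy by blast
    have "{x \<in> gV G. Inl x \<in> set xs} = insert v {x \<in> B v. Inl x \<in> set ys}"
    proof (rule set_eqI, rule iffI)
      fix x assume x: "x \<in> {x \<in> gV G. Inl x \<in> set xs}"
      then obtain j where j: "j < length xs" "xs ! j = Inl x" by (metis (mono_tags, lifting) in_set_conv_nth mem_Collect_eq)
      have "P j" using j x P_def inGv by simp
      hence ij: "i0 \<le> j" by (rule mini)
      show "x \<in> insert v {x \<in> B v. Inl x \<in> set ys}"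
      proof (cases "i0 = j")
        case True then show ?thesis using v j by simp
      next
        case False
        hence "i0 < j" using ij by simp
        hence "Inl v \<in> sanc T (Inl x)" using branch_sanc_mem[OF xs(1) _ j(1)] v j by metis
        moreover have "Inl x \<in> set ys" using nth_in_drop[of i0 j xs] ij j ys_def by simp
        ultimately show ?thesis using x B_def by simp
      qed
    next
      fix x assume x: "x \<in> insert v {x \<in> B v. Inl x \<in> set ys}"
      show "x \<in> {x \<in> gV G. Inl x \<in> set xs}"
      proof (cases "x = v")
        case True
        have "Inl v \<in> set xs" using v Pi0 P_def by (metis nth_mem)
        thus ?thesis using True v by simp
      next
        case False
        hence "x \<in> B v" "Inl x \<in> set ys" using x by auto
        moreover have "set ys \<subseteq> set xs" using ys_def set_drop_subset by metis
        ultimately show ?thesis using B_def by auto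
      qed
    qed
    thus ?thesis using inR vS Ss_def by blast
  qed
  show ?case unfolding S_eq using kseq inv by blast
qed


lemma forest_depth:
  assumes HA: "gA H \<subseteq> gV H \<times> gV H" and Hf: "\<And>u v w. (u,v) \<in> gA H \<Longrightarrow> (u,w) \<in> gA H \<Longrightarrow> v = w"
    and acyc: "acyclic (gA H)" and fin: "finite (gV H)"
  shows "(u, v) \<in> gA H \<Longrightarrow> card {w. (u, w) \<in> (gA H)\<^sup>+} = Suc (card {w. (v, w) \<in> (gA H)\<^sup>+})"
    and "card {w. (u, w) \<in> (gA H)\<^sup>+} \<le> card (gV H)"
proof -
  have tsub: "(gA H)\<^sup>+ \<subseteq> gV H \<times> gV H" by (rule trancl_subset_Sigma[OF HA])
  have fin': "\<And>x. finite {w. (x, w) \<in> (gA H)\<^sup>+}"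
    by (rule finite_subset[OF _ fin]) (use tsub in blast)
  show "card {w. (u, w) \<in> (gA H)\<^sup>+} \<le> card (gV H)"
    by (rule card_mono[OF fin]) (use tsub in blast)
  assume uv: "(u, v) \<in> gA H"
  have eq: "{w. (u, w) \<in> (gA H)\<^sup>+} = insert v {w. (v, w) \<in> (gA H)\<^sup>+}"
  proof (rule set_eqI, rule iffI)
    fix w assume "w \<in> {w. (u, w) \<in> (gA H)\<^sup>+}"
    hence "(u, w) \<in> (gA H)\<^sup>+" by simp
    thus "w \<in> insert v {w. (v, w) \<in> (gA H)\<^sup>+}"
    proof (rule converse_tranclE)
      assume "(u, w) \<in> gA H" thus ?thesis using Hf uv by auto
    next
      fix y assume "(u, y) \<in> gA H" "(y, w) \<in> (gA H)\<^sup>+"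
      thus ?thesis using Hf uv by auto
    qed
  next
    fix w assume "w \<in> insert v {w. (v, w) \<in> (gA H)\<^sup>+}"
    thus "w \<in> {w. (u, w) \<in> (gA H)\<^sup>+}" using uv by auto
  qed
  have "v \<notin> {w. (v, w) \<in> (gA H)\<^sup>+}" using acyc by (simp add: acyclic_def)
  thus "card {w. (u, w) \<in> (gA H)\<^sup>+} = Suc (card {w. (v, w) \<in> (gA H)\<^sup>+})"
    unfolding eq using fin' by simp
qed

locale glue =
  fixes G :: "'a ograph" and H :: "'a ograph" and Hs :: "'a \<Rightarrow> 'a ograph" and Rs :: "'a \<Rightarrow> 'a set set"
    and R :: "'a \<Rightarrow> 'a set" and k :: nat and g :: "nat \<Rightarrow> nat" and Tv :: "'a \<Rightarrow> ('a + nat) btree"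
    and idx :: "'a \<Rightarrow> nat" and d :: "'a \<Rightarrow> nat" and N :: nat
  assumes inj_g: "inj g"
    and inj_idx: "inj_on idx (gV H)"
    and finS: "finite (gV H)"
    and HA_sub: "gA H \<subseteq> gV H \<times> gV H"
    and Hfun: "\<And>u v w. (u,v) \<in> gA H \<Longrightarrow> (u,w) \<in> gA H \<Longrightarrow> v = w"
    and d_step: "\<And>u v. (u,v) \<in> gA H \<Longrightarrow> d u = Suc (d v)"
    and d_le: "\<And>u. u \<in> gV H \<Longrightarrow> d u \<le> N"
    and disj1: "\<And>v. v \<in> gV H \<Longrightarrow> gV (Hs v) \<inter> gV H = {}"
    and disj2: "\<And>v w. v \<in> gV H \<Longrightarrow> w \<in> gV H \<Longrightarrow> v \<noteq> w \<Longrightarrow> gV (Hs v) \<inter> gV (Hs w) = {}"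
    and RinRs: "\<And>u v. (u,v) \<in> gA H \<Longrightarrow> R u \<in> Rs v"
    and GV: "gV G = gV H \<union> (\<Union>v\<in>gV H. gV (Hs v))"
    and GA: "gA G = gA H \<union> (\<Union>v\<in>gV H. gA (Hs v)) \<union> {(u,x). \<exists>v. (u,v) \<in> gA H \<and> x \<in> R u}"
    and Tb: "\<And>v. v \<in> gV H \<Longrightarrow> burling_tree (Tv v)"
    and Tk: "\<And>v. v \<in> gV H \<Longrightarrow> k_burling_derived k (Tv v) (map_graph Inl (Hs v))"
    and Troot: "\<And>v. v \<in> gV H \<Longrightarrow> \<exists>r. troot (Tv v) = Inr r"
    and TV: "\<And>v. v \<in> gV H \<Longrightarrow> tV (Tv v) \<subseteq> Inl ` gV (Hs v) \<union> Inr ` range (\<lambda>m. g (prod_encode (Suc (idx v), m)))"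
    and Tbr: "\<And>v X. v \<in> gV H \<Longrightarrow> X \<in> Rs v \<Longrightarrow>
       \<exists>xs. is_branch (Tv v) xs \<and> (xs = [] \<or> hd xs = troot (Tv v)) \<and> set xs \<inter> range Inl = Inl ` X"
begin

abbreviation "S \<equiv> gV H"

definition A :: "nat \<Rightarrow> 'a + nat" where "A j = Inr (g (prod_encode (0, j)))"
definition isA :: "'a + nat \<Rightarrow> bool" where "isA x \<longleftrightarrow> (\<exists>j. x = A j)"
definition aidx :: "'a + nat \<Rightarrow> nat" where "aidx x = (SOME j. x = A j)"
definition own :: "'a + nat \<Rightarrow> 'a" where "own x = (SOME v. v \<in> S \<and> x \<in> tV (Tv v))"
definition out :: "'a \<Rightarrow> 'a" where "out u = (SOME v. (u, v) \<in> gA H)"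
definition rho :: "'a \<Rightarrow> 'a + nat" where "rho v = troot (Tv v)"
definition br :: "'a \<Rightarrow> ('a + nat) list" where
  "br u = (SOME ys. is_branch (Tv (out u)) ys \<and> (ys = [] \<or> hd ys = rho (out u)) \<and> set ys \<inter> range Inl = Inl ` R u)"

definition TT :: "('a + nat) btree" where
  "TT = \<lparr>tV = A ` {..Suc N} \<union> Inl ` S \<union> (\<Union>v\<in>S. tV (Tv v)),
         troot = A (Suc N),
         tpar = (\<lambda>x. if isA x then A (Suc (aidx x)) else if x \<in> Inl ` S then A (Suc (d (projl x)))
                     else if x = rho (own x) then Inl (own x) else tpar (Tv (own x)) x),
         tlast = (\<lambda>x. if isA x then A (aidx x - 1) else if x \<in> Inl ` S then rho (projl x)
                     else tlast (Tv (own x)) x),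
         tc = (\<lambda>x. if isA x then {} else if x \<in> Inl ` S then
                    (if \<exists>v. (projl x, v) \<in> gA H then set (A (d (projl x)) # Inl (out (projl x)) # br (projl x)) else {})
                  else tc (Tv (own x)) x)\<rparr>"

lemma A_inj[simp]: "A i = A j \<longleftrightarrow> i = j"
  using inj_g by (simp add: A_def inj_eq)

lemma A_Inl[simp]: "A j \<noteq> Inl u" "Inl u \<noteq> A j" by (simp_all add: A_def)

lemma isA_A[simp]: "isA (A j)" by (auto simp: isA_def)
lemma aidx_A[simp]: "aidx (A j) = j" by (simp add: aidx_def)
lemma isA_Inl[simp]: "\<not> isA (Inl u)" by (auto simp: isA_def)

lemma Tv_notA: assumes "v \<in> S" "x \<in> tV (Tv v)" shows "\<not> isA x"
proof
  assume "isA x" then obtain j where j: "x = A j" by (auto simp: isA_def)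
  have "x \<in> Inl ` gV (Hs v) \<union> Inr ` range (\<lambda>m. g (prod_encode (Suc (idx v), m)))" using TV assms by blast
  then obtain m where "x = Inr (g (prod_encode (Suc (idx v), m)))" using j by auto
  hence "g (prod_encode (Suc (idx v), m)) = g (prod_encode (0, j))" using j by (simp add: A_def)
  thus False using inj_g by (simp add: inj_eq)
qed

lemma Tv_notS: assumes "v \<in> S" "x \<in> tV (Tv v)" shows "x \<notin> Inl ` S"
proof
  assume "x \<in> Inl ` S" then obtain u where u: "x = Inl u" "u \<in> S" by blast
  have "x \<in> Inl ` gV (Hs v) \<union> Inr ` range (\<lambda>m. g (prod_encode (Suc (idx v), m)))" using TV assms by blast
  hence "u \<in> gV (Hs v)" using u by auto
  thus False using disj1[OF assms(1)] u by auto
qed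

lemma Tv_disj: assumes "v \<in> S" "w \<in> S" "x \<in> tV (Tv v)" "x \<in> tV (Tv w)" shows "v = w"
proof (rule ccontr)
  assume ne: "v \<noteq> w"
  have a: "x \<in> Inl ` gV (Hs v) \<union> Inr ` range (\<lambda>m. g (prod_encode (Suc (idx v), m)))" using TV assms by blast
  have b: "x \<in> Inl ` gV (Hs w) \<union> Inr ` range (\<lambda>m. g (prod_encode (Suc (idx w), m)))" using TV assms by blast
  show False
  proof (cases x)
    case (Inl u)
    hence "u \<in> gV (Hs v)" "u \<in> gV (Hs w)" using a b by auto
    thus False using disj2[OF assms(1,2) ne] by auto
  next
    case (Inr n)
    obtain m where m: "n = g (prod_encode (Suc (idx v), m))" using a Inr by auto
    obtain m' where m': "n = g (prod_encode (Suc (idx w), m'))" using b Inr by auto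
    have "g (prod_encode (Suc (idx v), m)) = g (prod_encode (Suc (idx w), m'))" using m m' by simp
    hence "idx v = idx w" using inj_g by (simp add: inj_eq)
    thus False using inj_idx assms ne by (meson inj_onD)
  qed
qed

lemma own_eq: assumes "v \<in> S" "x \<in> tV (Tv v)" shows "own x = v"
  unfolding own_def using assms Tv_disj by (metis (mono_tags, lifting) someI_ex)

lemma rho_in: "v \<in> S \<Longrightarrow> rho v \<in> tV (Tv v)"
  using Tb unfolding rho_def burling_tree_def rooted_tree_def by blast

lemma rho_Inr: "v \<in> S \<Longrightarrow> \<exists>r. rho v = Inr r" using Troot rho_def by simp

lemma TT_simps[simp]: "tV TT = A ` {..Suc N} \<union> Inl ` S \<union> (\<Union>v\<in>S. tV (Tv v))" "troot TT = A (Suc N)"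
  by (simp_all add: TT_def)

lemma tpar_A[simp]: "tpar TT (A j) = A (Suc j)" by (simp add: TT_def)
lemma tpar_S: "u \<in> S \<Longrightarrow> tpar TT (Inl u) = A (Suc (d u))" by (simp add: TT_def)
lemma tpar_rho: assumes "v \<in> S" shows "tpar TT (rho v) = Inl v"
proof -
  obtain r where r: "rho v = Inr r" using rho_Inr assms by blast
  have "\<not> isA (rho v)" using Tv_notA assms rho_in by blast
  moreover have "own (rho v) = v" using own_eq assms rho_in by blast
  moreover have "rho v \<notin> Inl ` S" using r by auto
  ultimately show ?thesis by (simp add: TT_def)
qed
lemma tpar_Tv: assumes "v \<in> S" "x \<in> tV (Tv v)" "x \<noteq> rho v" shows "tpar TT x = tpar (Tv v) x"
  using Tv_notA[OF assms(1,2)] Tv_notS[OF assms(1,2)] own_eq[OF assms(1,2)] assms(3) by (simp add: TT_def)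

lemma tlast_A[simp]: "tlast TT (A j) = A (j - 1)" by (simp add: TT_def)
lemma tlast_S: "u \<in> S \<Longrightarrow> tlast TT (Inl u) = rho u" by (simp add: TT_def)
lemma tlast_Tv: assumes "v \<in> S" "x \<in> tV (Tv v)" shows "tlast TT x = tlast (Tv v) x"
  using Tv_notA[OF assms(1,2)] Tv_notS[OF assms(1,2)] own_eq[OF assms(1,2)] by (simp add: TT_def)

lemma tc_A[simp]: "tc TT (A j) = {}" by (simp add: TT_def)
lemma tc_S: "u \<in> S \<Longrightarrow> tc TT (Inl u) = (if \<exists>v. (u, v) \<in> gA H then set (A (d u) # Inl (out u) # br u) else {})"
  by (simp add: TT_def)
lemma tc_Tv: assumes "v \<in> S" "x \<in> tV (Tv v)" shows "tc TT x = tc (Tv v) x"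
  using Tv_notA[OF assms(1,2)] Tv_notS[OF assms(1,2)] own_eq[OF assms(1,2)] by (simp add: TT_def)

end




context glue begin
lemma Tv_btr: "v \<in> S \<Longrightarrow> btr (Tv v)" using Tb btr_of by blast

lemma Tv_root: "v \<in> S \<Longrightarrow> troot (Tv v) = rho v" by (simp add: rho_def)

lemma A_in: "j \<le> Suc N \<Longrightarrow> A j \<in> tV TT" by simp
lemma S_in: "u \<in> S \<Longrightarrow> Inl u \<in> tV TT" by simp
lemma Tv_in: "v \<in> S \<Longrightarrow> x \<in> tV (Tv v) \<Longrightarrow> x \<in> tV TT" by auto

lemma Tv_notroot: "v \<in> S \<Longrightarrow> x \<in> tV (Tv v) \<Longrightarrow> x \<noteq> A j" using Tv_notA isA_A by metis

lemma vcases: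
  assumes "x \<in> tV TT"
  obtains (A) j where "j \<le> Suc N" "x = A j" | (S) u where "u \<in> S" "x = Inl u" | (T) v where "v \<in> S" "x \<in> tV (Tv v)"
  using assms by auto

lemma Tv_par_in: assumes "v \<in> S" "x \<in> tV (Tv v)" "x \<noteq> rho v" shows "tpar (Tv v) x \<in> tV (Tv v)"
  using Tb[OF assms(1)] assms unfolding burling_tree_def rooted_tree_def rho_def by blast

lemma ch_Tv: assumes v: "v \<in> S" and a: "a \<in> tV (Tv v)" shows "children TT a = children (Tv v) a"
proof (rule set_eqI, rule iffI)
  fix b assume b: "b \<in> children TT a"
  hence b': "b \<in> tV TT" "b \<noteq> A (Suc N)" "tpar TT b = a" by (auto simp: children_def)
  show "b \<in> children (Tv v) a"
    using b'(1)
  proof (cases rule: vcases)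
    case (A j) then show ?thesis using b' Tv_notroot[OF v a] by (metis tpar_A)
  next
    case (S u) then show ?thesis using b' Tv_notroot[OF v a] tpar_S by metis
  next
    case (T w)
    show ?thesis
    proof (cases "b = rho w")
      case True
      hence "a = Inl w" using b' tpar_rho T by simp
      thus ?thesis using Tv_notS[OF v a] T by auto
    next
      case False
      have "tpar (Tv w) b = a" using b' tpar_Tv[OF T False] by simp
      hence "a \<in> tV (Tv w)" using Tv_par_in[OF T False] by simp
      hence "w = v" using Tv_disj[OF v T(1) a] by simp
      thus ?thesis using T False b' tpar_Tv[OF T False] by (simp add: children_def rho_def)
    qed
  qed
next
  fix b assume b: "b \<in> children (Tv v) a"
  hence b': "b \<in> tV (Tv v)" "b \<noteq> rho v" "tpar (Tv v) b = a" by (auto simp: children_def rho_def)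
  thus "b \<in> children TT a" using Tv_in[OF v] tpar_Tv[OF v] Tv_notroot[OF v] by (simp add: children_def)
qed

lemma ch_S: assumes v: "v \<in> S" shows "children TT (Inl v) = {rho v}"
proof (rule set_eqI, rule iffI)
  fix b assume b: "b \<in> children TT (Inl v)"
  hence b': "b \<in> tV TT" "b \<noteq> A (Suc N)" "tpar TT b = Inl v" by (auto simp: children_def)
  show "b \<in> {rho v}"
    using b'(1)
  proof (cases rule: vcases)
    case (A j) then show ?thesis using b' by simp
  next
    case (S u) then show ?thesis using b' tpar_S by simp
  next
    case (T w)
    show ?thesis
    proof (cases "b = rho w")
      case True
      hence "w = v" using b' tpar_rho T by simp
      thus ?thesis using True by simp
    next
      case False
      have "tpar (Tv w) b = Inl v" using b' tpar_Tv[OF T False] by simp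
      hence "Inl v \<in> tV (Tv w)" using Tv_par_in[OF T False] by simp
      thus ?thesis using Tv_notS[OF T(1)] v by auto
    qed
  qed
next
  fix b assume "b \<in> {rho v}"
  thus "b \<in> children TT (Inl v)" using rho_in[OF v] Tv_in[OF v] tpar_rho[OF v] Tv_notroot[OF v]
    by (simp add: children_def)
qed

lemma ch_A0: "children TT (A 0) = {}"
proof -
  have "b \<notin> children TT (A 0)" for b
  proof
    assume b: "b \<in> children TT (A 0)"
    hence b': "b \<in> tV TT" "tpar TT b = A 0" by (auto simp: children_def)
    show False
      using b'(1)
    proof (cases rule: vcases)
      case (A j) then show ?thesis using b' by simp
    next
      case (S u) then show ?thesis using b' tpar_S by simp
    next
      case (T w)
      show ?thesis
      proof (cases "b = rho w")
        case True thus ?thesis using b' tpar_rho T by simp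
      next
        case False
        have "tpar (Tv w) b = A 0" using b' tpar_Tv[OF T False] by simp
        hence "A 0 \<in> tV (Tv w)" using Tv_par_in[OF T False] by simp
        thus ?thesis using Tv_notroot[OF T(1)] by blast
      qed
    qed
  qed
  thus ?thesis by blast
qed

lemma ch_A: "j \<le> N \<Longrightarrow> A j \<in> children TT (A (Suc j))"
  by (simp add: children_def)

lemma ch_AS: "u \<in> S \<Longrightarrow> Inl u \<in> children TT (A (Suc (d u)))"
  by (simp add: children_def tpar_S)

lemma pow_A: "(tpar TT ^^ m) (A j) = A (j + m)"
  by (induction m) auto

lemma pow_S: "u \<in> S \<Longrightarrow> (tpar TT ^^ Suc m) (Inl u) = A (Suc (d u) + m)"
  by (simp add: funpow_Suc_right pow_A tpar_S del: funpow.simps)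

lemma pow_Tv: assumes v: "v \<in> S" and x: "x \<in> tV (Tv v)"
  shows "m \<le> dep (Tv v) x \<Longrightarrow> (tpar TT ^^ m) x = (tpar (Tv v) ^^ m) x"
proof (induction m)
  case 0 then show ?case by simp
next
  case (Suc m)
  interpret rtree "Tv v" using Tv_btr[OF v] by (simp add: btr_def)
  let ?y = "(tpar (Tv v) ^^ m) x"
  have y: "?y \<in> tV (Tv v)" "dep (Tv v) ?y = dep (Tv v) x - m" using pow_in[OF x] Suc.prems by auto
  have "?y \<noteq> rho v" using y Suc.prems dep0[of ?y] Tv_root[OF v] by auto
  thus ?case using Suc tpar_Tv[OF v y(1)] by simp
qed

lemma pow_Tv_rho: assumes v: "v \<in> S" and x: "x \<in> tV (Tv v)"
  shows "(tpar TT ^^ Suc (dep (Tv v) x)) x = Inl v"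
proof -
  interpret rtree "Tv v" using Tv_btr[OF v] by (simp add: btr_def)
  have "(tpar TT ^^ dep (Tv v) x) x = rho v" using pow_Tv[OF v x order_refl] pow_dep[OF x] Tv_root[OF v] by simp
  thus ?thesis using tpar_rho[OF v] by simp
qed

lemma reachA: assumes "x \<in> tV TT" shows "\<exists>n j. j \<le> Suc N \<and> (tpar TT ^^ n) x = A j"
  using assms
proof (cases rule: vcases)
  case (A j) then show ?thesis by (metis funpow_0)
next
  case (S u) then show ?thesis using pow_S[of u 0] d_le[of u] by (metis add_0_right Suc_le_mono le_SucI)
next
  case (T v)
  have "(tpar TT ^^ Suc (Suc (dep (Tv v) x))) x = A (Suc (d v))"
    using pow_Tv_rho[OF T] tpar_S[OF T(1)] by simp
  thus ?thesis using d_le[OF T(1)] by (metis Suc_le_mono)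
qed

lemma TT_rooted: "rooted_tree TT"
  unfolding rooted_tree_def
proof (intro conjI ballI)
  have "\<forall>v\<in>S. finite (tV (Tv v))" using Tb unfolding burling_tree_def rooted_tree_def by blast
  thus "finite (tV TT)" using finS by simp
  show "troot TT \<in> tV TT" by simp
next
  fix x assume x: "x \<in> tV TT - {troot TT}"
  hence x': "x \<in> tV TT" "x \<noteq> A (Suc N)" by auto
  show "tpar TT x \<in> tV TT" using x'(1)
  proof (cases rule: vcases)
    case (A j) then show ?thesis using x' by simp
  next
    case (S u) then show ?thesis using d_le tpar_S by simp
  next
    case (T v)
    show ?thesis
    proof (cases "x = rho v")
      case True then show ?thesis using tpar_rho T by simp
    next
      case False then show ?thesis using tpar_Tv[OF T False] Tv_par_in[OF T False] T(1) by auto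
    qed
  qed
next
  fix x assume x: "x \<in> tV TT"
  obtain n j where nj: "j \<le> Suc N" "(tpar TT ^^ n) x = A j" using reachA[OF x] by blast
  have "(tpar TT ^^ (Suc N - j + n)) x = (tpar TT ^^ (Suc N - j)) ((tpar TT ^^ n) x)"
    by (simp add: funpow_add)
  also have "\<dots> = A (Suc N)" using nj by (simp add: pow_A)
  finally have "(tpar TT ^^ (Suc N - j + n)) x = A (Suc N)" .
  thus "\<exists>n. (tpar TT ^^ n) x = troot TT" by auto
qed

lemma branch_Tv_TT: assumes v: "v \<in> S" and b: "is_branch (Tv v) xs" shows "is_branch TT xs"
proof -
  have s: "set xs \<subseteq> tV (Tv v)" using b by (simp add: is_branch_def)
  have "successively (\<lambda>a b. b \<in> children TT a) xs"
    using b unfolding is_branch_def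
    by (elim conjE successively_mono) (use s ch_Tv[OF v] in auto)
  thus ?thesis using s Tv_in[OF v] by (auto simp: is_branch_def)
qed

lemma branch_TT_Tv: assumes v: "v \<in> S" and b: "is_branch TT xs" and h: "xs \<noteq> []" "hd xs \<in> tV (Tv v)"
  shows "is_branch (Tv v) xs"
proof -
  have cl: "b' \<in> tV (Tv v)" if "a \<in> tV (Tv v)" "b' \<in> children TT a" for a b'
  proof -
    have "b' \<in> children (Tv v) a" using that ch_Tv[OF v] by blast
    thus ?thesis by (simp add: children_def)
  qed
  have s: "set xs \<subseteq> tV (Tv v)"
    by (rule succ_closed[of TT xs]) (use b h cl in \<open>auto simp: is_branch_def\<close>)
  have "successively (\<lambda>a b. b \<in> children (Tv v) a) xs"
    using b unfolding is_branch_def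
    by (elim conjE successively_mono) (use s ch_Tv[OF v] in auto)
  thus ?thesis using s by (auto simp: is_branch_def)
qed

lemma out_eq: "(u, v) \<in> gA H \<Longrightarrow> out u = v"
  unfolding out_def using Hfun by (metis someI_ex)

lemma HS: "(u, v) \<in> gA H \<Longrightarrow> u \<in> S \<and> v \<in> S" using HA_sub by auto

lemma br_prop: assumes uv: "(u, v) \<in> gA H"
  shows "is_branch (Tv v) (br u) \<and> (br u = [] \<or> hd (br u) = rho v) \<and> set (br u) \<inter> range Inl = Inl ` R u"
proof -
  have "\<exists>ys. is_branch (Tv v) ys \<and> (ys = [] \<or> hd ys = rho v) \<and> set ys \<inter> range Inl = Inl ` R u"
    using Tbr[OF _ RinRs[OF uv]] HS[OF uv] Tv_root by auto
  thus ?thesis unfolding br_def out_eq[OF uv] by (rule someI_ex)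
qed

lemma lastborn_Tv: assumes v: "v \<in> S" and x: "x \<in> tV (Tv v)" and nr: "x \<noteq> rho v"
  shows "is_last_born TT x \<longleftrightarrow> is_last_born (Tv v) x"
proof -
  have p: "tpar TT x = tpar (Tv v) x" using tpar_Tv[OF v x nr] .
  have "tpar (Tv v) x \<in> tV (Tv v)" using Tv_par_in[OF v x nr] .
  hence "tlast TT (tpar TT x) = tlast (Tv v) (tpar (Tv v) x)" using p tlast_Tv[OF v] by simp
  thus ?thesis using nr Tv_notroot[OF v x] p by (simp add: is_last_born_def rho_def)
qed

lemma TT_burling: "burling_tree TT"
  unfolding burling_tree_def
proof (intro conjI ballI impI)
  show "rooted_tree TT" by (rule TT_rooted)
next
  fix x assume x: "x \<in> tV TT" "\<not> is_leaf TT x"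
  show "tlast TT x \<in> children TT x" using x(1)
  proof (cases rule: vcases)
    case (A j)
    show ?thesis
    proof (cases j)
      case 0 then show ?thesis using x A ch_A0 by (simp add: is_leaf_def)
    next
      case (Suc i) then show ?thesis using A ch_A[of i] by simp
    qed
  next
    case (S u) then show ?thesis using ch_S tlast_S by simp
  next
    case (T v)
    interpret btr "Tv v" using Tv_btr[OF T(1)] .
    show ?thesis using x tlast_child[of x] ch_Tv[OF T] tlast_Tv[OF T] T by (simp add: is_leaf_def)
  qed
next
  fix x assume x: "x \<in> tV TT" "x = troot TT \<or> is_last_born TT x"
  show "tc TT x = {}" using x(1)
  proof (cases rule: vcases)
    case (A j) then show ?thesis by simp
  next
    case (S u)
    have "\<not> is_last_born TT x" using S tpar_S by (simp add: is_last_born_def)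
    hence False using x S by simp
    thus ?thesis ..
  next
    case (T v)
    interpret btr "Tv v" using Tv_btr[OF T(1)] .
    show ?thesis
    proof (cases "x = rho v")
      case True then show ?thesis using tc_Tv[OF T] tc_empty[of x] T Tv_root by simp
    next
      case False
      have "is_last_born TT x" using x Tv_notroot[OF T] by auto
      hence "is_last_born (Tv v) x" using lastborn_Tv[OF T False] by simp
      thus ?thesis using tc_Tv[OF T] tc_empty[of x] T by simp
    qed
  qed
next
  fix x assume x: "x \<in> tV TT" "x \<noteq> troot TT \<and> \<not> is_last_born TT x"
  show "\<exists>xs. is_branch TT xs \<and> (xs = [] \<or> hd xs = tlast TT (tpar TT x)) \<and> tc TT x = set xs"
    using x(1)
  proof (cases rule: vcases)
    case (A j)
    have "j \<noteq> Suc N" using x A by simp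
    hence "is_last_born TT x" using A by (simp add: is_last_born_def)
    hence False using x by simp
    thus ?thesis ..
  next
    case (S u)
    show ?thesis
    proof (cases "\<exists>v. (u, v) \<in> gA H")
      case False then show ?thesis using S tc_S[of u] by (intro exI[of _ "[]"]) (simp add: is_branch_def)
    next
      case True
      then obtain v where uv: "(u, v) \<in> gA H" by blast
      have v: "v \<in> S" using HS[OF uv] by simp
      have ov: "out u = v" using out_eq[OF uv] .
      have bp: "is_branch (Tv v) (br u)" "br u = [] \<or> hd (br u) = rho v" using br_prop[OF uv] by auto
      have bT: "is_branch TT (br u)" using branch_Tv_TT[OF v bp(1)] .
      define xs where "xs = A (d u) # Inl v # br u"
      have du: "d u = Suc (d v)" using d_step[OF uv] .
      have c1: "Inl v \<in> children TT (A (d u))" using ch_AS[OF v] du by simp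
      have c2: "br u = [] \<or> hd (br u) \<in> children TT (Inl v)" using bp ch_S[OF v] by auto
      have "successively (\<lambda>a b. b \<in> children TT a) xs"
        using c1 c2 bT unfolding xs_def is_branch_def by (cases "br u") auto
      moreover have "set xs \<subseteq> tV TT" using bT v d_le[of u] S unfolding xs_def by (auto simp: is_branch_def)
      ultimately have "is_branch TT xs" by (simp add: is_branch_def)
      moreover have "hd xs = tlast TT (tpar TT x)" using S tpar_S xs_def by simp
      moreover have "tc TT x = set xs" using S tc_S[of u] True ov xs_def by simp
      ultimately show ?thesis by blast
    qed
  next
    case (T v)
    interpret btr "Tv v" using Tv_btr[OF T(1)] .
    have nr: "x \<noteq> rho v"
    proof
      assume "x = rho v"
      hence "is_last_born TT x" using tpar_rho[OF T(1)] tlast_S[OF T(1)] Tv_notroot[OF T] by (simp add: is_last_born_def)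
      thus False using x by simp
    qed
    have nl: "\<not> is_last_born (Tv v) x" using lastborn_Tv[OF T nr] x by simp
    obtain xs where xs: "is_branch (Tv v) xs" "xs = [] \<or> hd xs = tlast (Tv v) (tpar (Tv v) x)" "tc (Tv v) x = set xs"
      using tc_branch[OF T(2) _ nl] nr Tv_root[OF T(1)] by auto
    have "tlast (Tv v) (tpar (Tv v) x) = tlast TT (tpar TT x)"
      using tpar_Tv[OF T nr] tlast_Tv[OF T(1) Tv_par_in[OF T nr]] by simp
    thus ?thesis using xs branch_Tv_TT[OF T(1) xs(1)] tc_Tv[OF T] by metis
  qed
qed

lemma Tk_facts: assumes v: "v \<in> S"
  shows "Inl ` gV (Hs v) \<subseteq> tV (Tv v)" "gA (Hs v) \<subseteq> gV (Hs v) \<times> gV (Hs v)"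
    "\<And>a b. a \<in> gV (Hs v) \<Longrightarrow> b \<in> gV (Hs v) \<Longrightarrow> (a, b) \<in> gA (Hs v) \<longleftrightarrow> Inl b \<in> tc (Tv v) (Inl a)"
    "\<And>ys. is_branch (Tv v) ys \<Longrightarrow> card (set ys \<inter> Inl ` gV (Hs v)) \<le> k"
  using Tk[OF v] unfolding k_burling_derived_def derived_Inl by (auto simp: map_graph_def)

lemma Tv_Inl: "v \<in> S \<Longrightarrow> Inl x \<in> tV (Tv v) \<Longrightarrow> x \<in> gV (Hs v)"
  using TV by fastforce

lemma R_sub: assumes uv: "(u, v) \<in> gA H" shows "R u \<subseteq> gV (Hs v)"
proof
  fix x assume x: "x \<in> R u"
  have v: "v \<in> S" using HS[OF uv] by simp
  have "Inl x \<in> set (br u)" using br_prop[OF uv] x by blast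
  hence "Inl x \<in> tV (Tv v)" using br_prop[OF uv] by (auto simp: is_branch_def)
  thus "x \<in> gV (Hs v)" using Tv_Inl[OF v] by simp
qed

lemma GA_iff: "(a, b) \<in> gA G \<longleftrightarrow> (a, b) \<in> gA H \<or> (\<exists>w\<in>S. (a, b) \<in> gA (Hs w)) \<or> (\<exists>v. (a, v) \<in> gA H \<and> b \<in> R a)"
  using GA by blast

lemma GVI1: "u \<in> S \<Longrightarrow> u \<in> gV G" using GV by blast
lemma GVI2: "w \<in> S \<Longrightarrow> x \<in> gV (Hs w) \<Longrightarrow> x \<in> gV G" using GV by blast
lemma GVE: "x \<in> gV G \<Longrightarrow> x \<in> S \<or> (\<exists>w\<in>S. x \<in> gV (Hs w))" using GV by blast

lemma TT_derived: "derived TT (map_graph Inl G)"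
  unfolding derived_Inl
proof (intro conjI ballI)
  show "Inl ` gV G \<subseteq> tV TT"
  proof
    fix y :: "'a + nat" assume "y \<in> Inl ` gV G"
    then obtain x where x: "y = Inl x" "x \<in> gV G" by blast
    from GVE[OF x(2)] show "y \<in> tV TT"
    proof (elim disjE bexE)
      assume "x \<in> S" thus ?thesis using x by simp
    next
      fix w assume "w \<in> S" "x \<in> gV (Hs w)"
      thus ?thesis using Tk_facts(1)[of w] x Tv_in by blast
    qed
  qed
  show "gA G \<subseteq> gV G \<times> gV G"
  proof
    fix p assume p: "p \<in> gA G"
    obtain a b where ab: "p = (a, b)" by (cases p)
    have "(a, b) \<in> gA H \<or> (\<exists>w\<in>S. (a, b) \<in> gA (Hs w)) \<or> (\<exists>v. (a, v) \<in> gA H \<and> b \<in> R a)"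
      using GA_iff p ab by simp
    then show "p \<in> gV G \<times> gV G"
    proof (elim disjE bexE exE conjE)
      assume "(a, b) \<in> gA H" thus ?thesis using HS ab GVI1 by blast
    next
      fix w assume "w \<in> S" "(a, b) \<in> gA (Hs w)"
      thus ?thesis using Tk_facts(2)[of w] ab GVI2[of w] by blast
    next
      fix v assume "(a, v) \<in> gA H" "b \<in> R a"
      thus ?thesis using HS R_sub ab GVI1 GVI2 by blast
    qed
  qed
next
  fix a b assume a: "a \<in> gV G" and b: "b \<in> gV G"
  show "(a, b) \<in> gA G \<longleftrightarrow> Inl b \<in> tc TT (Inl a)"
  proof (cases "a \<in> S")
    case aS: True
    have nHs: "\<not> (\<exists>w\<in>S. (a, b) \<in> gA (Hs w))"
    proof
      assume "\<exists>w\<in>S. (a, b) \<in> gA (Hs w)"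
      then obtain w where w: "w \<in> S" "(a, b) \<in> gA (Hs w)" by blast
      hence "a \<in> gV (Hs w)" using Tk_facts(2)[OF w(1)] by blast
      thus False using disj1[OF w(1)] aS by blast
    qed
    show ?thesis
    proof (cases "\<exists>v. (a, v) \<in> gA H")
      case False
      have "tc TT (Inl a) = {}" using tc_S[OF aS] False by simp
      moreover have "(a, b) \<notin> gA G"
      proof
        assume "(a, b) \<in> gA G"
        hence "(a, b) \<in> gA H \<or> (\<exists>w\<in>S. (a, b) \<in> gA (Hs w)) \<or> (\<exists>v. (a, v) \<in> gA H \<and> b \<in> R a)"
          by (simp only: GA_iff)
        thus False using nHs False by blast
      qed
      ultimately show ?thesis by simp
    next
      case True
      then obtain v where av: "(a, v) \<in> gA H" by blast
      have tcv: "tc TT (Inl a) = insert (A (d a)) (insert (Inl v) (set (br a)))"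
        using tc_S[OF aS] True out_eq[OF av] by simp
      have brR: "Inl b \<in> set (br a) \<longleftrightarrow> b \<in> R a" using br_prop[OF av] by blast
      have e1: "Inl b \<in> tc TT (Inl a) \<longleftrightarrow> b = v \<or> b \<in> R a" unfolding tcv using brR by simp
      have e2: "(a, b) \<in> gA G \<longleftrightarrow> b = v \<or> b \<in> R a"
      proof
        assume "(a, b) \<in> gA G"
        hence "(a, b) \<in> gA H \<or> (\<exists>w\<in>S. (a, b) \<in> gA (Hs w)) \<or> (\<exists>v. (a, v) \<in> gA H \<and> b \<in> R a)"
          by (simp only: GA_iff)
        thus "b = v \<or> b \<in> R a" using nHs Hfun[OF av] by blast
      next
        assume "b = v \<or> b \<in> R a"
        hence "(a, b) \<in> gA H \<or> (\<exists>v. (a, v) \<in> gA H \<and> b \<in> R a)" using av by blast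
        thus "(a, b) \<in> gA G" by (simp only: GA_iff) blast
      qed
      show ?thesis using e1 e2 by simp
    qed
  next
    case aS: False
    then obtain w where w: "w \<in> S" "a \<in> gV (Hs w)" using GVE[OF a] by blast
    have aT: "Inl a \<in> tV (Tv w)" using Tk_facts(1)[OF w(1)] w by auto
    have "(a, b) \<in> gA G \<longleftrightarrow> (a, b) \<in> gA (Hs w)"
    proof
      assume "(a, b) \<in> gA G"
      then consider "(a, b) \<in> gA H" | w' where "w' \<in> S" "(a, b) \<in> gA (Hs w')" | v where "(a, v) \<in> gA H"
        using GA_iff by blast
      then show "(a, b) \<in> gA (Hs w)"
      proof cases
        case 1 then show ?thesis using HS aS by blast
      next
        case 2
        have "a \<in> gV (Hs w')" using 2 Tk_facts(2) by blast
        hence "w' = w" using disj2 w 2 by blast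
        thus ?thesis using 2 by simp
      next
        case 3 then show ?thesis using HS aS by blast
      qed
    next
      assume "(a, b) \<in> gA (Hs w)" thus "(a, b) \<in> gA G" using GA w by blast
    qed
    also have "\<dots> \<longleftrightarrow> Inl b \<in> tc (Tv w) (Inl a)"
    proof (cases "b \<in> gV (Hs w)")
      case True then show ?thesis using Tk_facts(3)[OF w(1) w(2)] by simp
    next
      case False
      interpret btr "Tv w" using Tv_btr[OF w(1)] .
      have "Inl b \<notin> tc (Tv w) (Inl a)" using tc_sub[OF aT] Tv_Inl[OF w(1)] False by blast
      moreover have "(a, b) \<notin> gA (Hs w)" using Tk_facts(2)[OF w(1)] False by blast
      ultimately show ?thesis by simp
    qed
    also have "\<dots> \<longleftrightarrow> Inl b \<in> tc TT (Inl a)" using tc_Tv[OF w(1) aT] by simp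
    finally show ?thesis .
  qed
qed

definition U where "U = (\<Union>v\<in>S. tV (Tv v))"

lemma U_iff: "x \<in> U \<longleftrightarrow> (\<exists>v\<in>S. x \<in> tV (Tv v))" unfolding U_def by (rule UN_iff)

lemma Gv_cases: assumes "y \<in> tV TT" "y \<in> Inl ` gV G" "y \<notin> U"
  shows "y \<in> Inl ` S"
  using assms(1)
proof (cases rule: vcases)
  case (A j) then show ?thesis using assms(2) by auto
next
  case (S u) then show ?thesis by simp
next
  case (T v) then show ?thesis using assms(3) unfolding U_iff by blast
qed

lemma next_U: assumes b: "is_branch TT xs" and p: "Suc p < length xs" and s: "xs ! p \<in> Inl ` S"
  shows "xs ! Suc p \<in> U"
proof -
  obtain u where u: "u \<in> S" "xs ! p = Inl u" using s by blast
  have sc: "successively (\<lambda>a b. b \<in> children TT a) xs" using b by (simp add: is_branch_def)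
  have "(\<lambda>a b. b \<in> children TT a) (xs ! p) (xs ! Suc p)" by (rule successively_nth[OF sc p])
  hence "xs ! Suc p \<in> children TT (Inl u)" using u by simp
  hence e: "xs ! Suc p = rho u" using ch_S[OF u(1)] by simp
  have "rho u \<in> U" unfolding U_iff using u(1) rho_in[OF u(1)] by blast
  thus ?thesis unfolding e .
qed

lemma Tv_count: assumes v: "v \<in> S" and b: "is_branch (Tv v) ys"
  shows "card (set ys \<inter> Inl ` gV G) \<le> k"
proof -
  have "set ys \<inter> Inl ` gV G \<subseteq> set ys \<inter> Inl ` gV (Hs v)"
  proof
    fix y assume y: "y \<in> set ys \<inter> Inl ` gV G"
    then obtain x where x: "y = Inl x" by blast
    have "y \<in> tV (Tv v)" using y b by (auto simp: is_branch_def)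
    hence "x \<in> gV (Hs v)" using Tv_Inl[OF v] x by simp
    thus "y \<in> set ys \<inter> Inl ` gV (Hs v)" using x y by blast
  qed
  hence "card (set ys \<inter> Inl ` gV G) \<le> card (set ys \<inter> Inl ` gV (Hs v))" by (intro card_mono) auto
  also have "\<dots> \<le> k" using Tk_facts(4)[OF v b] .
  finally show ?thesis .
qed

lemma TT_count: assumes b: "is_branch TT xs" shows "card (set xs \<inter> Inl ` gV G) \<le> Suc k"
proof -
  let ?U = "U"
  let ?Gv = "Inl ` gV G :: ('a + nat) set"
  have xsV: "\<And>p. p < length xs \<Longrightarrow> xs ! p \<in> tV TT" using b unfolding is_branch_def by (meson nth_mem subsetD)
  show ?thesis
  proof (cases "\<exists>i<length xs. xs ! i \<in> ?U")
    case False
    have "set xs \<inter> ?Gv \<subseteq> {xs ! (length xs - 1)}"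
    proof
      fix y assume y: "y \<in> set xs \<inter> ?Gv"
      then obtain p where p: "p < length xs" "xs ! p = y" by (meson IntD1 in_set_conv_nth)
      have yS: "y \<in> Inl ` S" using Gv_cases[of y] xsV[OF p(1)] p y False by blast
      have "\<not> Suc p < length xs" using next_U[OF b _ ] yS p False by blast
      hence "p = length xs - 1" using p by simp
      thus "y \<in> {xs ! (length xs - 1)}" using p by simp
    qed
    hence "card (set xs \<inter> ?Gv) \<le> card {xs ! (length xs - 1)}" by (intro card_mono) auto
    thus ?thesis by simp
  next
    case True
    define i where "i = (LEAST i. i < length xs \<and> xs ! i \<in> ?U)"
    have ex: "\<exists>i. i < length xs \<and> xs ! i \<in> ?U" using True by blast
    have i: "i < length xs" "xs ! i \<in> ?U" using LeastI_ex[OF ex] unfolding i_def by blast+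
    have imin: "\<And>j. j < length xs \<Longrightarrow> xs ! j \<in> ?U \<Longrightarrow> i \<le> j" unfolding i_def by (simp add: Least_le)
    obtain v where v: "v \<in> S" "xs ! i \<in> tV (Tv v)" using i(2) unfolding U_iff by blast
    define zs where "zs = drop i xs"
    have zb: "is_branch TT zs" using drop_branch[OF b] zs_def by simp
    have zne: "zs \<noteq> []" "hd zs = xs ! i" using i zs_def by (auto simp: hd_drop_conv_nth)
    have zv: "is_branch (Tv v) zs" using branch_TT_Tv[OF v(1) zb zne(1)] zne v by simp
    have c2: "card (set zs \<inter> ?Gv) \<le> k" using Tv_count[OF v(1) zv] .
    have t1: "set (take i xs) \<inter> ?Gv \<subseteq> {xs ! (i - 1)}"
    proof
      fix y assume y: "y \<in> set (take i xs) \<inter> ?Gv"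
      then obtain p where p: "p < i" "xs ! p = y" using i
        by (auto simp: in_set_conv_nth)
      have pl: "p < length xs" using p i by simp
      have yU: "y \<notin> ?U" using imin[OF pl] p by auto
      have yS: "y \<in> Inl ` S" using Gv_cases[of y] xsV[OF pl] p y yU by blast
      have "xs ! Suc p \<in> ?U" using next_U[OF b _ ] yS p i by simp
      hence "i \<le> Suc p" using imin[of "Suc p"] p i by simp
      hence "p = i - 1" using p by simp
      thus "y \<in> {xs ! (i - 1)}" using p by simp
    qed
    have c1: "card (set (take i xs) \<inter> ?Gv) \<le> 1"
      using card_mono[OF _ t1] by simp
    have "set xs \<inter> ?Gv = (set (take i xs) \<inter> ?Gv) \<union> (set zs \<inter> ?Gv)"
      unfolding zs_def by (metis Int_Un_distrib2 append_take_drop_id set_append)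
    hence "card (set xs \<inter> ?Gv) \<le> card (set (take i xs) \<inter> ?Gv) + card (set zs \<inter> ?Gv)"
      by (simp add: card_Un_le)
    thus ?thesis using c1 c2 by simp
  qed
qed

lemma sanc_S_A: assumes u: "u \<in> S" shows "sanc TT (Inl u) \<subseteq> range A"
proof
  fix y assume "y \<in> sanc TT (Inl u)"
  then obtain n where n: "1 \<le> n" "y = (tpar TT ^^ n) (Inl u)" by (auto simp: sanc_def)
  then obtain m where "n = Suc m" by (cases n) auto
  thus "y \<in> range A" using n pow_S[OF u] by simp
qed

lemma TT_top: "top_set TT (map_graph Inl G) = Inl ` S"
proof -
  interpret rtree TT using TT_rooted by (simp add: rtree_def)
  have sub: "Inl ` gV G \<subseteq> tV TT" using TT_derived unfolding derived_Inl by blast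
  have "{v \<in> gV G. sanc TT (Inl v) \<inter> Inl ` gV G = {}} = S"
  proof (rule set_eqI, rule iffI)
    fix v assume v: "v \<in> {v \<in> gV G. sanc TT (Inl v) \<inter> Inl ` gV G = {}}"
    show "v \<in> S"
    proof (rule ccontr)
      assume vS: "v \<notin> S"
      then obtain w where w: "w \<in> S" "v \<in> gV (Hs w)" using GVE v by blast
      let ?x = "Inl v :: 'a + nat"
      have xT: "?x \<in> tV (Tv w)" using Tk_facts(1)[OF w(1)] w by blast
      have xV: "?x \<in> tV TT" using Tv_in[OF w(1) xT] .
      interpret rv: rtree "Tv w" using Tv_btr[OF w(1)] by (simp add: btr_def)
      let ?n = "Suc (dep (Tv w) ?x)"
      have pw: "(tpar TT ^^ ?n) ?x = Inl w" using pow_Tv_rho[OF w(1) xT] .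
      have "?n \<le> D ?x"
      proof (rule ccontr)
        assume "\<not> ?n \<le> D ?x"
        hence le: "D ?x \<le> dep (Tv w) ?x" by simp
        have "(tpar TT ^^ D ?x) ?x = (tpar (Tv w) ^^ D ?x) ?x" using pow_Tv[OF w(1) xT le] .
        moreover have "(tpar (Tv w) ^^ D ?x) ?x \<in> tV (Tv w)" using rv.pow_in[OF xT le] by simp
        ultimately have "A (Suc N) \<in> tV (Tv w)" using pow_dep[OF xV] by simp
        thus False using Tv_notroot[OF w(1)] by blast
      qed
      hence "Inl w \<in> sanc TT ?x" using sancI[of ?n ?x] pw by simp
      moreover have "(Inl w :: 'a + nat) \<in> Inl ` gV G" using GVI1[OF w(1)] by simp
      ultimately show False using v by blast
    qed
  next
    fix v assume v: "v \<in> S"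
    have "sanc TT (Inl v) \<inter> Inl ` gV G = {}" using sanc_S_A[OF v] by auto
    thus "v \<in> {v \<in> gV G. sanc TT (Inl v) \<inter> Inl ` gV G = {}}" using GVI1[OF v] by simp
  qed
  thus ?thesis using top_Inl[OF TT_rooted sub] by simp
qed

lemma TT_inv: assumes X: "X \<in> {{}} \<union> {insert v X | v X. v \<in> S \<and> X \<in> Rs v}"
  shows "\<exists>xs. is_branch TT xs \<and> (xs = [] \<or> hd xs = troot TT) \<and> set xs \<inter> range Inl = Inl ` X"
proof (cases "X = {}")
  case True then show ?thesis by (intro exI[of _ "[]"]) (simp add: is_branch_def)
next
  case False
  then obtain v X' where v: "X = insert v X'" "v \<in> S" "X' \<in> Rs v" using X by blast
  interpret rtree TT using TT_rooted by (simp add: rtree_def)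
  obtain ys where ys: "is_branch (Tv v) ys" "ys = [] \<or> hd ys = rho v" "set ys \<inter> range Inl = Inl ` X'"
    using Tbr[OF v(2,3)] Tv_root[OF v(2)] by auto
  have vV: "Inl v \<in> tV TT" using v by simp
  define xs where "xs = anc TT (Inl v) @ ys"
  have an: "anc TT (Inl v) \<noteq> []" using anc_len[of "Inl v"] by (metis length_0_conv nat.distinct(1))
  have yT: "is_branch TT ys" using branch_Tv_TT[OF v(2) ys(1)] .
  have "is_branch TT xs"
    using anc_branch[OF vV] yT ys(2) ch_S[OF v(2)] an unfolding xs_def is_branch_def
    by (auto simp: successively_append_iff anc_last)
  moreover have "hd xs = troot TT" using an anc_hd[OF vV] xs_def by simp
  moreover have "set xs \<inter> range Inl = Inl ` X"
  proof -
    have "set (anc TT (Inl v)) \<inter> range Inl = {Inl v}"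
      using sanc_anc[of "Inl v"] sanc_S_A[OF v(2)] by auto
    thus ?thesis using ys(3) v(1) xs_def by auto
  qed
  ultimately show ?thesis by blast
qed

lemma glue_main:
  "burling_tree TT \<and> k_burling_derived (Suc k) TT (map_graph Inl G) \<and> top_set TT (map_graph Inl G) = Inl ` S
   \<and> (\<exists>r. troot TT = Inr r) \<and> tV TT \<subseteq> Inl ` gV G \<union> Inr ` range g
   \<and> (\<forall>X\<in>{{}} \<union> {insert v X | v X. v \<in> S \<and> X \<in> Rs v}.
        \<exists>xs. is_branch TT xs \<and> (xs = [] \<or> hd xs = troot TT) \<and> set xs \<inter> range Inl = Inl ` X)"
proof (intro conjI ballI)
  show "burling_tree TT" by (rule TT_burling)
  show "k_burling_derived (Suc k) TT (map_graph Inl G)"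
    unfolding k_burling_derived_def using TT_derived TT_count by (simp add: map_graph_def)
  show "top_set TT (map_graph Inl G) = Inl ` S" by (rule TT_top)
  show "\<exists>r. troot TT = Inr r" by (simp add: A_def)
  show "tV TT \<subseteq> Inl ` gV G \<union> Inr ` range g"
  proof
    fix x assume "x \<in> tV TT"
    thus "x \<in> Inl ` gV G \<union> Inr ` range g"
    proof (cases rule: vcases)
      case (A j) then show ?thesis by (simp add: A_def)
    next
      case (S u) then show ?thesis using GVI1 by simp
    next
      case (T v)
      have "x \<in> Inl ` gV (Hs v) \<union> Inr ` range (\<lambda>m. g (prod_encode (Suc (idx v), m)))" using TV T by blast
      thus ?thesis using GVI2[OF T(1)] by auto
    qed
  qed
next
  fix X assume "X \<in> {{}} \<union> {insert v X | v X. v \<in> S \<and> X \<in> Rs v}"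
  thus "\<exists>xs. is_branch TT xs \<and> (xs = [] \<or> hd xs = troot TT) \<and> set xs \<inter> range Inl = Inl ` X"
    by (rule TT_inv)
qed

end

lemma bwd:
  fixes G :: "'a ograph" and g :: "nat \<Rightarrow> nat"
  assumes "kseq_base k G Ss H" "inj g"
  shows "\<exists>T :: ('a + nat) btree. burling_tree T \<and> k_burling_derived k T (map_graph Inl G)
     \<and> top_set T (map_graph Inl G) = Inl ` gV H \<and> (\<exists>r. troot T = Inr r) \<and> tV T \<subseteq> Inl ` gV G \<union> Inr ` range g
     \<and> (\<forall>X\<in>Ss. \<exists>xs. is_branch T xs \<and> (xs = [] \<or> hd xs = troot T) \<and> set xs \<inter> range Inl = Inl ` X)"
  using assms
proof (induction k arbitrary: G Ss H g)
  case 0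
  have G: "G = empty_graph" and S: "Ss = {{}}" and H: "H = empty_graph" using 0 by simp_all
  define T0 :: "('a + nat) btree" where
    "T0 = \<lparr>tV = {Inr (g 0)}, troot = Inr (g 0), tpar = (\<lambda>_. Inr (g 0)), tlast = (\<lambda>_. Inr (g 0)), tc = (\<lambda>_. {})\<rparr>"
  have ch: "children T0 x = {}" for x by (simp add: children_def T0_def)
  have rt: "rooted_tree T0" unfolding rooted_tree_def T0_def by (auto intro: exI[of _ 0])
  have bt: "burling_tree T0" unfolding burling_tree_def using rt ch by (simp add: T0_def is_leaf_def)
  have der: "derived T0 (map_graph Inl G)" unfolding derived_Inl using G by (simp add: empty_graph_def)
  have kb: "k_burling_derived 0 T0 (map_graph Inl G)" unfolding k_burling_derived_def
    using der G by (simp add: empty_graph_def map_graph_def)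
  have top: "top_set T0 (map_graph Inl G) = Inl ` gV H" using G H
    by (simp add: top_set_def map_graph_def empty_graph_def)
  show ?case
    apply (rule exI[of _ T0])
    using bt kb top S by (auto simp: T0_def is_branch_def intro: exI[of _ "[]"])
next
  case (Suc k)
  from Suc.prems(1) have inf: "in_forest H" and
    ex: "\<exists>(Hs :: 'a \<Rightarrow> 'a ograph) (Rs :: 'a \<Rightarrow> 'a set set) (R :: 'a \<Rightarrow> 'a set).
        (\<forall>v\<in>gV H. \<exists>H'. kseq_base k (Hs v) (Rs v) H')
      \<and> (\<forall>v\<in>gV H. gV (Hs v) \<inter> gV H = {})
      \<and> (\<forall>v\<in>gV H. \<forall>w\<in>gV H. v \<noteq> w \<longrightarrow> gV (Hs v) \<inter> gV (Hs w) = {})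
      \<and> (\<forall>u v. (u, v) \<in> gA H \<longrightarrow> R u \<in> Rs v)
      \<and> gV G = gV H \<union> (\<Union>v\<in>gV H. gV (Hs v))
      \<and> gA G = gA H \<union> (\<Union>v\<in>gV H. gA (Hs v))
               \<union> {(u, x). \<exists>v. (u, v) \<in> gA H \<and> x \<in> R u}
      \<and> Ss = {{}} \<union> {insert v X | v X. v \<in> gV H \<and> X \<in> Rs v}"
    by simp_all
  then obtain Hs Rs R where
    h1: "\<forall>v\<in>gV H. \<exists>H'. kseq_base k (Hs v) (Rs v) H'" and
    h2: "\<forall>v\<in>gV H. gV (Hs v) \<inter> gV H = {}" and
    h3: "\<forall>v\<in>gV H. \<forall>w\<in>gV H. v \<noteq> w \<longrightarrow> gV (Hs v) \<inter> gV (Hs w) = {}" and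
    h4: "\<forall>u v. (u, v) \<in> gA H \<longrightarrow> R u \<in> Rs v" and
    h5: "gV G = gV H \<union> (\<Union>v\<in>gV H. gV (Hs v))" and
    h6: "gA G = gA H \<union> (\<Union>v\<in>gV H. gA (Hs v)) \<union> {(u, x). \<exists>v. (u, v) \<in> gA H \<and> x \<in> R u}" and
    h7: "Ss = {{}} \<union> {insert v X | v X. v \<in> gV H \<and> X \<in> Rs v}"
    by blast
  have og: "oriented_graph H" and Hfun: "\<And>u v w. (u, v) \<in> gA H \<Longrightarrow> (u, w) \<in> gA H \<Longrightarrow> v = w"
    and acyc: "acyclic (gA H)" using inf by (auto simp: in_forest_def)
  have finS: "finite (gV H)" and HA: "gA H \<subseteq> gV H \<times> gV H" using og by (auto simp: oriented_graph_def)
  obtain idx :: "'a \<Rightarrow> nat" where idx: "inj_on idx (gV H)" using finite_imp_inj_to_nat_seg[OF finS] by blast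
  define gv where "gv v = (\<lambda>m. g (prod_encode (Suc (idx v), m)))" for v
  have inj_gv: "inj (gv v)" for v
  proof (rule injI)
    fix x y assume "gv v x = gv v y"
    hence "prod_encode (Suc (idx v), x) = prod_encode (Suc (idx v), y)"
      unfolding gv_def using Suc.prems(2) by (simp add: inj_eq)
    thus "x = y" by simp
  qed
  have "\<forall>v\<in>gV H. \<exists>T :: ('a + nat) btree. burling_tree T \<and> k_burling_derived k T (map_graph Inl (Hs v))
     \<and> (\<exists>r. troot T = Inr r) \<and> tV T \<subseteq> Inl ` gV (Hs v) \<union> Inr ` range (gv v)
     \<and> (\<forall>X\<in>Rs v. \<exists>xs. is_branch T xs \<and> (xs = [] \<or> hd xs = troot T) \<and> set xs \<inter> range Inl = Inl ` X)"
  proof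
    fix v assume v: "v \<in> gV H"
    then obtain H' where "kseq_base k (Hs v) (Rs v) H'" using h1 by blast
    from Suc.IH[OF this inj_gv[of v]] show "\<exists>T :: ('a + nat) btree. burling_tree T \<and> k_burling_derived k T (map_graph Inl (Hs v))
     \<and> (\<exists>r. troot T = Inr r) \<and> tV T \<subseteq> Inl ` gV (Hs v) \<union> Inr ` range (gv v)
     \<and> (\<forall>X\<in>Rs v. \<exists>xs. is_branch T xs \<and> (xs = [] \<or> hd xs = troot T) \<and> set xs \<inter> range Inl = Inl ` X)"
      by blast
  qed
  from bchoice[OF this] obtain Tv :: "'a \<Rightarrow> ('a + nat) btree" where Tv: "\<forall>v\<in>gV H. burling_tree (Tv v) \<and> k_burling_derived k (Tv v) (map_graph Inl (Hs v))
     \<and> (\<exists>r. troot (Tv v) = Inr r) \<and> tV (Tv v) \<subseteq> Inl ` gV (Hs v) \<union> Inr ` range (gv v)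
     \<and> (\<forall>X\<in>Rs v. \<exists>xs. is_branch (Tv v) xs \<and> (xs = [] \<or> hd xs = troot (Tv v)) \<and> set xs \<inter> range Inl = Inl ` X)"
    by blast
  define d where "d u = card {w. (u, w) \<in> (gA H)\<^sup>+}" for u
  have dstep: "d u = Suc (d v)" if uv: "(u, v) \<in> gA H" for u v
    unfolding d_def
    by (rule forest_depth(1)[of H u v]) (use HA Hfun acyc finS uv in blast)+
  have dle: "d u \<le> card (gV H)" if "u \<in> gV H" for u
    unfolding d_def
    by (rule forest_depth(2)[of H u]) (use HA Hfun acyc finS in blast)+
  interpret gl: glue G H Hs Rs R k g Tv idx d "card (gV H)"
  proof
    show "inj g" by (rule Suc.prems(2))
    show "inj_on idx (gV H)" by (rule idx)
    show "finite (gV H)" by (rule finS)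
    show "gA H \<subseteq> gV H \<times> gV H" by (rule HA)
    show "\<And>u v w. (u, v) \<in> gA H \<Longrightarrow> (u, w) \<in> gA H \<Longrightarrow> v = w" by (rule Hfun)
    show "\<And>u v. (u, v) \<in> gA H \<Longrightarrow> d u = Suc (d v)" by (rule dstep)
    show "\<And>u. u \<in> gV H \<Longrightarrow> d u \<le> card (gV H)" by (rule dle)
    show "\<And>v. v \<in> gV H \<Longrightarrow> gV (Hs v) \<inter> gV H = {}" using h2 by blast
    show "\<And>v w. v \<in> gV H \<Longrightarrow> w \<in> gV H \<Longrightarrow> v \<noteq> w \<Longrightarrow> gV (Hs v) \<inter> gV (Hs w) = {}" using h3 by blast
    show "\<And>u v. (u, v) \<in> gA H \<Longrightarrow> R u \<in> Rs v" using h4 by blast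
    show "gV G = gV H \<union> (\<Union>v\<in>gV H. gV (Hs v))" by (rule h5)
    show "gA G = gA H \<union> (\<Union>v\<in>gV H. gA (Hs v)) \<union> {(u, x). \<exists>v. (u, v) \<in> gA H \<and> x \<in> R u}" by (rule h6)
    show "\<And>v. v \<in> gV H \<Longrightarrow> burling_tree (Tv v)" using Tv by blast
    show "\<And>v. v \<in> gV H \<Longrightarrow> k_burling_derived k (Tv v) (map_graph Inl (Hs v))" using Tv by blast
    show "\<And>v. v \<in> gV H \<Longrightarrow> \<exists>r. troot (Tv v) = Inr r" using Tv by blast
    show "\<And>v. v \<in> gV H \<Longrightarrow> tV (Tv v) \<subseteq> Inl ` gV (Hs v) \<union> Inr ` range (\<lambda>m. g (prod_encode (Suc (idx v), m)))"
      using Tv unfolding gv_def by blast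
    show "\<And>v X. v \<in> gV H \<Longrightarrow> X \<in> Rs v \<Longrightarrow>
       \<exists>xs. is_branch (Tv v) xs \<and> (xs = [] \<or> hd xs = troot (Tv v)) \<and> set xs \<inter> range Inl = Inl ` X"
      using Tv by blast
  qed
  show ?case using gl.glue_main h7 by blast
qed

theorem lemma4p4:
  fixes k :: nat and G :: "'a ograph" and S :: "'a set"
  assumes "oriented_graph G" and "S \<subseteq> gV G"
  shows "(\<exists>T :: ('a + nat) btree. burling_tree T
            \<and> k_burling_derived k T (map_graph Inl G)
            \<and> top_set T (map_graph Inl G) = Inl ` S)
         \<longleftrightarrow> (\<exists>Ss. kseq_base k G Ss (induced G S))"
proof
  assume "\<exists>T :: ('a + nat) btree. burling_tree T \<and> k_burling_derived k T (map_graph Inl G)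
            \<and> top_set T (map_graph Inl G) = Inl ` S"
  then obtain T :: "('a + nat) btree" where T: "burling_tree T" "k_burling_derived k T (map_graph Inl G)"
    "top_set T (map_graph Inl G) = Inl ` S" by blast
  have rt: "rooted_tree T" using T(1) by (simp add: burling_tree_def)
  have sub: "Inl ` gV G \<subseteq> tV T" using T(2) unfolding k_burling_derived_def derived_Inl by blast
  have "Inl ` {v \<in> gV G. sanc T (Inl v) \<inter> Inl ` gV G = {}} = (Inl ` S :: ('a + nat) set)"
    using top_Inl[OF rt sub] T(3) by simp
  hence e: "{v \<in> gV G. sanc T (Inl v) \<inter> Inl ` gV G = {}} = S"
    by (simp add: inj_image_eq_iff)
  show "\<exists>Ss. kseq_base k G Ss (induced G S)" using fwd[OF T(1,2)] unfolding e by blast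
next
  assume "\<exists>Ss. kseq_base k G Ss (induced G S)"
  then obtain Ss where Ss: "kseq_base k G Ss (induced G S)" by blast
  from bwd[OF Ss, of id] show "\<exists>T :: ('a + nat) btree. burling_tree T \<and> k_burling_derived k T (map_graph Inl G)
            \<and> top_set T (map_graph Inl G) = Inl ` S"
    by (auto simp: induced_def)
qed


end
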